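(* Let $m,k\ge1$, let $A_0$ be a symmetric positive definite $2m\times2m$ matrix and let $A_1$ be a symmetric, non-degenerate, $J$-hyperbolic $2k\times 2k$ matrix. Define $H:\mathbb{R}^{2m}\times\mathbb{R}^{2k}\to\mathbb{R}$ by $$H(x,y)=\tfrac12x^TA_0x+\tfrac12y^TA_1y-1.$$ Then $H_0(x):=\frac12x^TA_0x-1$ satisfies $dH_0(Y_0)-H_0>0$ on $\mathbb{R}^{2m}$ for the Liouville vector field $Y_0=\frac12x\partial_x$, and $H$ is a strongly tentacular Hamiltonian; in particular $H^{-1}(0)$ is a tentacular hyperboloid.
   Context: $\mathbb{R}^{2n}$ carries the standard symplectic form $\omega_0$ and $\mathbb{J}=\begin{pmatrix}0&I\\-I&0\end{pmatrix}$; a symmetric matrix $A$ is $J$-hyperbolic if $\mathbb{J}A$ has no eigenvalues on $i\mathbb{R}$. A function is coercive if all its sublevel sets are compact. The Poisson bracket is $\{F,H\}=\omega_0(X_F,X_H)$ where $dH=\omega_0(\cdot,X_H)$. A Liouville vector field $Y$ ($d\iota_Y\omega_0=\omega_0$) is asymptotically regular if $\|DY(x)\|<c$ for some $c>0$ and all $x$. Let $\mathcal{H}$ be the class of smooth $H:\mathbb{R}^{2n}\to\mathbb{R}$ such that, with $\Sigma:=H^{-1}(0)$: (h1) there exist an asymptotically regular Liouville vector field $Y$ and $c,c'>0$ with $dH(Y)(x)\ge c|x|^2-c'$ for all $x$; (h2) $\sup_x\|D^3H(x)\|\,|x|<\infty$; (h3) there is a coercive function $F$ defined near $\Sigma$ such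 that for all $x\in\Sigma$ outside a compact set either $\{H,F\}(x)\neq0$ or $\{H,\{H,F\}\}(x)>0$. $H^{-1}(0)$ is of restricted contact type if there is an asymptotically regular Liouville vector field $Y$ with $dH(Y)>0$ on $H^{-1}(0)$. $H\in\mathcal{H}$ is strongly tentacular if $H^{-1}(0)$ is of restricted contact type. A hyperboloid is the zero set of $\frac12x^TAx-1$ with $A$ symmetric non-degenerate of signature $(l,2n-l)$, $1\le l\le 2n-1$; a symplectic hyperboloid is an orbit of hyperboloids under the linear symplectic group $\operatorname{Sp}(\mathbb{R}^{2n})$; it is a tentacular hyperboloid if it has a representative of the form $\frac12x^TAx-1$ that is strongly tentacular. *)

theory Defs
  imports "HOL-Analysis.Analysis"
begin

text \<open>The space R^{2n} is modelled as real^('n + 'n): the coordinates Inl i are the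
  q-coordinates and Inr i the p-coordinates, n = CARD('n).\<close>

definition Jmat :: "real^('n::finite + 'n)^('n + 'n)" where
  "Jmat = (\<chi> i j. case (i, j) of
             (Inl a, Inr b) \<Rightarrow> (if a = b then 1 else 0)
           | (Inr a, Inl b) \<Rightarrow> (if a = b then -1 else 0)
           | _ \<Rightarrow> 0)"

definition omega0 :: "real^('n::finite + 'n) \<Rightarrow> real^('n + 'n) \<Rightarrow> real" where
  "omega0 u v = u \<bullet> (Jmat *v v)"

coinductive smooth_on :: "'a::real_normed_vector set \<Rightarrow> ('a \<Rightarrow> 'b::real_normed_vector) \<Rightarrow> bool" where
  "open U \<Longrightarrow> f differentiable_on U \<Longrightarrow> (\<forall>v. smooth_on U (\<lambda>x. frechet_derivative f (at x) v))
   \<Longrightarrow> smooth_on U f"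

definition hamvf :: "(real^('n::finite + 'n) \<Rightarrow> real) \<Rightarrow> real^('n + 'n) \<Rightarrow> real^('n + 'n)" where
  "hamvf H x = (THE v. \<forall>u. frechet_derivative H (at x) u = omega0 u v)"

definition poisson :: "(real^('n::finite + 'n) \<Rightarrow> real) \<Rightarrow> (real^('n + 'n) \<Rightarrow> real) \<Rightarrow> real^('n + 'n) \<Rightarrow> real" where
  "poisson F H x = omega0 (hamvf F x) (hamvf H x)"

text \<open>Liouville vector field: d(iota_Y omega0) = omega0, written out for the constant form omega0.\<close>
definition liouville :: "(real^('n::finite + 'n) \<Rightarrow> real^('n + 'n)) \<Rightarrow> bool" where
  "liouville Y \<longleftrightarrow> smooth_on UNIV Y \<and>
     (\<forall>x u v. omega0 (frechet_derivative Y (at x) u) v + omega0 u (frechet_derivative Y (at x) v)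
              = omega0 u v)"

definition asymp_regular :: "(real^('n::finite + 'n) \<Rightarrow> real^('n + 'n)) \<Rightarrow> bool" where
  "asymp_regular Y \<longleftrightarrow> (\<exists>c>0. \<forall>x. onorm (frechet_derivative Y (at x)) < c)"

definition third_deriv :: "(real^('n::finite + 'n) \<Rightarrow> real) \<Rightarrow> real^('n + 'n) \<Rightarrow> real^('n + 'n)
     \<Rightarrow> real^('n + 'n) \<Rightarrow> real^('n + 'n) \<Rightarrow> real" where
  "third_deriv H x u v w =
     frechet_derivative (\<lambda>y. frechet_derivative (\<lambda>z. frechet_derivative H (at z) u) (at y) v) (at x) w"

definition coercive_on :: "'a::topological_space set \<Rightarrow> ('a \<Rightarrow> real) \<Rightarrow> bool" where
  "coercive_on U F \<longleftrightarrow> (\<forall>c. compact {x \<in> U. F x \<le> c})"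

definition h1 :: "(real^('n::finite + 'n) \<Rightarrow> real) \<Rightarrow> bool" where
  "h1 H \<longleftrightarrow> (\<exists>Y c c'. liouville Y \<and> asymp_regular Y \<and> c > 0 \<and> c' > 0 \<and>
      (\<forall>x. frechet_derivative H (at x) (Y x) \<ge> c * (norm x)\<^sup>2 - c'))"

text \<open>sup_x |D^3 H(x)| |x| < infinity, with the operator norm of the trilinear form.\<close>
definition h2 :: "(real^('n::finite + 'n) \<Rightarrow> real) \<Rightarrow> bool" where
  "h2 H \<longleftrightarrow> (\<exists>C. \<forall>x u v w. \<bar>third_deriv H x u v w\<bar> * norm x \<le> C * norm u * norm v * norm w)"

definition h3 :: "(real^('n::finite + 'n) \<Rightarrow> real) \<Rightarrow> bool" where
  "h3 H \<longleftrightarrow> (\<exists>U F K. open U \<and> H -` {0} \<subseteq> U \<and> smooth_on U F \<and> coercive_on U F \<and> compact K \<and>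
      (\<forall>x\<in>H -` {0} - K. poisson H F x \<noteq> 0 \<or> poisson H (poisson H F) x > 0))"

definition classH :: "(real^('n::finite + 'n) \<Rightarrow> real) \<Rightarrow> bool" where
  "classH H \<longleftrightarrow> smooth_on UNIV H \<and> h1 H \<and> h2 H \<and> h3 H"

definition restricted_contact :: "(real^('n::finite + 'n) \<Rightarrow> real) \<Rightarrow> bool" where
  "restricted_contact H \<longleftrightarrow> (\<exists>Y. liouville Y \<and> asymp_regular Y \<and>
      (\<forall>x. H x = 0 \<longrightarrow> frechet_derivative H (at x) (Y x) > 0))"

definition strongly_tentacular :: "(real^('n::finite + 'n) \<Rightarrow> real) \<Rightarrow> bool" where
  "strongly_tentacular H \<longleftrightarrow> classH H \<and> restricted_contact H"

definition cmat :: "real^'n::finite^'m::finite \<Rightarrow> complex^'n^'m" where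
  "cmat M = (\<chi> i j. complex_of_real (M $ i $ j))"

definition J_hyperbolic :: "real^('n::finite + 'n)^('n + 'n) \<Rightarrow> bool" where
  "J_hyperbolic A \<longleftrightarrow> (\<forall>\<mu>::real. \<forall>v::complex^('n + 'n).
      cmat (Jmat ** A) *v v = (\<i> * complex_of_real \<mu>) *s v \<longrightarrow> v = 0)"

definition quadH :: "real^'n::finite^'n \<Rightarrow> real^'n \<Rightarrow> real" where
  "quadH A x = 1/2 * (x \<bullet> (A *v x)) - 1"

text \<open>Matrix of a hyperboloid: symmetric, non-degenerate, signature (l, 2n-l) with 1 \<le> l \<le> 2n-1,
  i.e. at least one positive and at least one negative eigenvalue.\<close>
definition hyperboloid_matrix :: "real^'n::finite^'n \<Rightarrow> bool" where
  "hyperboloid_matrix A \<longleftrightarrow> transpose A = A \<and> invertible A \<and>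
     (\<exists>c>0. \<exists>v. v \<noteq> 0 \<and> A *v v = c *s v) \<and> (\<exists>c<0. \<exists>v. v \<noteq> 0 \<and> A *v v = c *s v)"

definition symplectic_matrix :: "real^('n::finite + 'n)^('n + 'n) \<Rightarrow> bool" where
  "symplectic_matrix P \<longleftrightarrow> invertible P \<and> (\<forall>u v. omega0 (P *v u) (P *v v) = omega0 u v)"

definition tentacular_hyperboloid :: "(real^('n::finite + 'n)) set \<Rightarrow> bool" where
  "tentacular_hyperboloid S \<longleftrightarrow> (\<exists>P A. symplectic_matrix P \<and> hyperboloid_matrix A \<and>
      (\<lambda>x. P *v x) ` S = quadH A -` {0} \<and> strongly_tentacular (quadH A))"

text \<open>Identification R^{2m} x R^{2k} = R^{2(m+k)} compatible with the standard symplectic forms.\<close>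
definition projX :: "real^(('m::finite + 'k::finite) + ('m + 'k)) \<Rightarrow> real^('m + 'm)" where
  "projX z = (\<chi> i. case i of Inl a \<Rightarrow> z $ Inl (Inl a) | Inr a \<Rightarrow> z $ Inr (Inl a))"

definition projY :: "real^(('m::finite + 'k::finite) + ('m + 'k)) \<Rightarrow> real^('k + 'k)" where
  "projY z = (\<chi> i. case i of Inl a \<Rightarrow> z $ Inl (Inr a) | Inr a \<Rightarrow> z $ Inr (Inr a))"

end

theory Submission
  imports Defs "HOL-Computational_Algebra.Fundamental_Theorem_Algebra"
begin

lemma sum_UNIV_sum:
  fixes f :: "'a::finite + 'b::finite \<Rightarrow> 'c::comm_monoid_add"
  shows "(\<Sum>i\<in>UNIV. f i) = (\<Sum>a\<in>UNIV. f (Inl a)) + (\<Sum>b\<in>UNIV. f (Inr b))"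
proof -
  have "(\<Sum>i\<in>UNIV. f i) = (\<Sum>i\<in>Inl ` UNIV \<union> Inr ` UNIV. f i)" by (simp add: UNIV_sum[symmetric])
  also have "\<dots> = (\<Sum>i\<in>Inl ` UNIV. f i) + (\<Sum>i\<in>Inr ` UNIV. f i)"
    by (rule sum.union_disjoint) auto
  also have "\<dots> = (\<Sum>a\<in>UNIV. f (Inl a)) + (\<Sum>b\<in>UNIV. f (Inr b))"
    by (simp add: sum.reindex)
  finally show ?thesis .
qed

lemma all_sum_iff: "(\<forall>i. P i) \<longleftrightarrow> (\<forall>a. P (Inl a)) \<and> (\<forall>b. P (Inr b))"
  by (metis sum.exhaust)

lemma ifmult1: "(if P then (1::real) else 0) * x = (if P then x else 0)" by simp
lemma ifmult3: "x * (if P then (1::real) else 0) = (if P then x else 0)" by simp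
lemma ifmult2: "(if P then (-1::real) else 0) * x = (if P then -x else 0)" by simp

lemma Jmat_Inl: "(Jmat *v v) $ Inl a = v $ Inr a"
  by (simp add: Jmat_def matrix_vector_mult_def sum_UNIV_sum ifmult1)

lemma Jmat_Inr: "(Jmat *v v) $ Inr a = - v $ Inl a"
  by (simp add: Jmat_def matrix_vector_mult_def sum_UNIV_sum ifmult2)

lemma Jmat_J: "Jmat *v (Jmat *v v) = - (v::real^('n::finite+'n))"
  by (simp add: vec_eq_iff all_sum_iff Jmat_Inl Jmat_Inr)

lemma Jmat_inner_swap: "(u::real^('n::finite+'n)) \<bullet> (Jmat *v w) = - ((Jmat *v u) \<bullet> w)"
  by (simp add: inner_vec_def sum_UNIV_sum Jmat_Inl Jmat_Inr sum_negf[symmetric] algebra_simps sum.distrib[symmetric])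

lemma Jmat_skew: "(u::real^('n::finite+'n)) \<bullet> (Jmat *v u) = 0"
  using Jmat_inner_swap[of u u] by (simp add: inner_commute)

lemma Jmat_orth: "(Jmat *v u) \<bullet> (Jmat *v (w::real^('n::finite+'n))) = u \<bullet> w"
  using Jmat_inner_swap[of "Jmat *v u" w] by (simp add: Jmat_J)

lemma transpose_Jmat: "transpose (Jmat::real^('n::finite+'n)^('n+'n)) = - Jmat"
  by (simp add: vec_eq_iff all_sum_iff transpose_def Jmat_def)


lemma Jmat_Jmat: "(Jmat::real^('n::finite+'n)^('n+'n)) ** Jmat = - mat 1"
proof (rule matrix_eq[THEN iffD2], intro allI)
  fix x :: "real^('n+'n)"
  show "(Jmat ** Jmat) *v x = (- mat 1) *v x"
  proof -
    have "(- mat 1) *v x = - (mat 1 *v x)"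
      by (simp add: matrix_vector_mult_def vec_eq_iff sum_negf[symmetric])
    then show ?thesis by (simp add: matrix_vector_mul_assoc[symmetric] Jmat_J)
  qed
qed

lemma inner_transpose: "(x::real^'n::finite) \<bullet> (A *v y) = (transpose A *v x) \<bullet> y"
  by (simp add: dot_lmul_matrix[symmetric])

lemma sym_inner: "transpose A = A \<Longrightarrow> (x::real^'n::finite) \<bullet> (A *v y) = (A *v x) \<bullet> y"
  by (metis inner_transpose)

lemma entry_inner: "axis i 1 \<bullet> (M *v axis j 1) = (M::real^'n::finite^'m::finite) $ i $ j"
  by (simp add: matrix_vector_mult_def inner_vec_def axis_def ifmult1 ifmult3)

lemma sym_from_inner:
  assumes "\<And>u w. u \<bullet> ((M::real^'n::finite^'n) *v w) = (M *v u) \<bullet> w"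
  shows "transpose M = M"
proof -
  have "M $ j $ i = M $ i $ j" for i j
    using assms[of "axis i 1" "axis j 1"] entry_inner[of i M j] entry_inner[of j M i]
    by (simp add: inner_commute)
  then show ?thesis by (simp add: vec_eq_iff transpose_def)
qed

subsection \<open>Block structure\<close>

lemma projX_Inl[simp]: "projX z $ Inl a = z $ Inl (Inl a)" by (simp add: projX_def)
lemma projX_Inr[simp]: "projX z $ Inr a = z $ Inr (Inl a)" by (simp add: projX_def)
lemma projY_Inl[simp]: "projY z $ Inl a = z $ Inl (Inr a)" by (simp add: projY_def)
lemma projY_Inr[simp]: "projY z $ Inr a = z $ Inr (Inr a)" by (simp add: projY_def)

definition embXY :: "real^('m::finite+'m) \<Rightarrow> real^('k::finite+'k) \<Rightarrow> real^(('m+'k)+('m+'k))" where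
  "embXY x y = (\<chi> i. case i of Inl (Inl a) \<Rightarrow> x $ Inl a | Inr (Inl a) \<Rightarrow> x $ Inr a
       | Inl (Inr b) \<Rightarrow> y $ Inl b | Inr (Inr b) \<Rightarrow> y $ Inr b)"

lemma projX_emb[simp]: "projX (embXY x y) = x"
  by (simp add: vec_eq_iff embXY_def all_sum_iff split: sum.splits)
lemma projY_emb[simp]: "projY (embXY x y) = y"
  by (simp add: vec_eq_iff embXY_def all_sum_iff split: sum.splits)
lemma emb_proj[simp]: "embXY (projX z) (projY z) = z"
  by (simp add: vec_eq_iff embXY_def all_sum_iff split: sum.splits)

lemma XY_eqI: "projX u = projX w \<Longrightarrow> projY u = projY w \<Longrightarrow> u = w"
  by (metis emb_proj)

lemma projX_add[simp]: "projX (u + w) = projX u + projX w" by (simp add: vec_eq_iff all_sum_iff split: sum.splits)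
lemma projY_add[simp]: "projY (u + w) = projY u + projY w" by (simp add: vec_eq_iff all_sum_iff split: sum.splits)
lemma projX_scale[simp]: "projX (c *\<^sub>R u) = c *\<^sub>R projX u" by (simp add: vec_eq_iff all_sum_iff split: sum.splits)
lemma projY_scale[simp]: "projY (c *\<^sub>R u) = c *\<^sub>R projY u" by (simp add: vec_eq_iff all_sum_iff split: sum.splits)
lemma projX_minus[simp]: "projX (- u) = - projX u" by (simp add: vec_eq_iff all_sum_iff split: sum.splits)
lemma projY_minus[simp]: "projY (- u) = - projY u" by (simp add: vec_eq_iff all_sum_iff split: sum.splits)
lemma projX_diff[simp]: "projX (u - w) = projX u - projX w" by (simp add: vec_eq_iff all_sum_iff split: sum.splits)
lemma projY_diff[simp]: "projY (u - w) = projY u - projY w" by (simp add: vec_eq_iff all_sum_iff split: sum.splits)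
lemma projX_0[simp]: "projX 0 = 0" by (simp add: vec_eq_iff all_sum_iff split: sum.splits)
lemma projY_0[simp]: "projY 0 = 0" by (simp add: vec_eq_iff all_sum_iff split: sum.splits)

lemma emb_add: "embXY (x1 + x2) (y1 + y2) = embXY x1 y1 + embXY x2 y2"
  by (rule XY_eqI) simp_all
lemma emb_scale: "embXY (c *\<^sub>R x) (c *\<^sub>R y) = c *\<^sub>R embXY x y"
  by (rule XY_eqI) simp_all

lemma linear_projX: "linear projX" by (rule linearI) simp_all
lemma linear_projY: "linear projY" by (rule linearI) simp_all

lemma inner_XY: "(u::real^(('m::finite+'k::finite)+('m+'k))) \<bullet> w = projX u \<bullet> projX w + projY u \<bullet> projY w"
  by (simp add: inner_vec_def sum_UNIV_sum algebra_simps)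

lemma norm_XY: "(norm (z::real^(('m::finite+'k::finite)+('m+'k))))\<^sup>2 = (norm (projX z))\<^sup>2 + (norm (projY z))\<^sup>2"
  by (simp add: power2_norm_eq_inner inner_XY)

lemma projX_J: "projX (Jmat *v z) = Jmat *v projX z"
  by (simp add: vec_eq_iff all_sum_iff split: sum.splits) (auto simp: Jmat_Inl Jmat_Inr all_sum_iff split: sum.splits)
lemma projY_J: "projY (Jmat *v z) = Jmat *v projY z"
  by (simp add: vec_eq_iff all_sum_iff split: sum.splits) (auto simp: Jmat_Inl Jmat_Inr all_sum_iff split: sum.splits)

definition blk :: "real^('m::finite+'m)^('m+'m) \<Rightarrow> real^('k::finite+'k)^('k+'k) \<Rightarrow> real^(('m+'k)+('m+'k))^(('m+'k)+('m+'k))" where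
  "blk A B = matrix (\<lambda>z. embXY (A *v projX z) (B *v projY z))"

lemma blk_mult: "blk A B *v z = embXY (A *v projX z) (B *v projY z)"
proof -
  have "linear (\<lambda>z. embXY (A *v projX z) (B *v projY z))"
    by (rule linearI) (simp_all add: matrix_vector_right_distrib emb_add matrix_vector_mult_scaleR emb_scale)
  then show ?thesis unfolding blk_def by (simp add: matrix_works)
qed

lemma projX_blk[simp]: "projX (blk A B *v z) = A *v projX z" by (simp add: blk_mult)
lemma projY_blk[simp]: "projY (blk A B *v z) = B *v projY z" by (simp add: blk_mult)

lemma blk_sym: "transpose A = A \<Longrightarrow> transpose B = B \<Longrightarrow> transpose (blk A B) = blk A B"
  by (rule sym_from_inner) (simp add: inner_XY sym_inner)

subsection \<open>Derivatives, Hamiltonian vector fields, Poisson brackets\<close>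

lemma mvm_minus: "(M::real^'n::finite^'m::finite) *v (- x) = - (M *v x)"
  by (simp add: vec_eq_iff matrix_vector_mult_def sum_negf[symmetric])

lemma riesz: assumes "linear (f::real^'n::finite \<Rightarrow> real)" shows "\<exists>g. \<forall>u. f u = u \<bullet> g"
proof (intro exI allI)
  fix u :: "real^'n"
  have "f u = f (\<Sum>i\<in>UNIV. u$i *s axis i 1)" by (simp add: basis_expansion)
  also have "\<dots> = (\<Sum>i\<in>UNIV. u$i * f (axis i 1))"
    using assms by (simp add: linear_sum linear_scale scalar_mult_eq_scaleR)
  also have "\<dots> = u \<bullet> (\<chi> i. f (axis i 1))" by (simp add: inner_vec_def)
  finally show "f u = u \<bullet> (\<chi> i. f (axis i 1))" .
qed

lemma hamvf_eq:
  assumes "(H has_derivative (\<lambda>u. u \<bullet> g)) (at x)"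
  shows "hamvf H x = - (Jmat *v g)"
proof -
  have fd: "frechet_derivative H (at x) = (\<lambda>u. u \<bullet> g)" using frechet_derivative_at[OF assms] by simp
  have ok: "\<forall>u. u \<bullet> g = omega0 u (- (Jmat *v g))"
    by (simp add: omega0_def mvm_minus Jmat_J)
  have uniq: "v = - (Jmat *v g)" if "\<forall>u. u \<bullet> g = omega0 u v" for v
  proof -
    have "\<forall>u. u \<bullet> (g - Jmat *v v) = 0" using that by (simp add: omega0_def inner_diff_right)
    then have "g - Jmat *v v = 0" by (metis inner_eq_zero_iff)
    then have "Jmat *v g = Jmat *v (Jmat *v v)" by simp
    then show ?thesis by (simp add: Jmat_J)
  qed
  show ?thesis unfolding hamvf_def fd
    by (rule the_equality) (use ok uniq in auto)
qed

lemma poisson_eq: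
  assumes H: "(H has_derivative (\<lambda>u. u \<bullet> g)) (at x)" and F: "(F has_derivative F') (at x)"
    and lin: "linear F'"
  shows "poisson H F x = F' (- (Jmat *v g))"
proof -
  obtain gF where gF: "\<forall>u. F' u = u \<bullet> gF" using riesz[OF lin] by blast
  have F2: "(F has_derivative (\<lambda>u. u \<bullet> gF)) (at x)"
    using F gF by (metis (no_types, lifting) ext)
  show ?thesis
    unfolding poisson_def hamvf_eq[OF H] hamvf_eq[OF F2]
    by (simp add: omega0_def mvm_minus Jmat_J gF)
qed

subsection \<open>Smoothness\<close>

inductive polyf :: "('a::euclidean_space \<Rightarrow> real) \<Rightarrow> bool" where
  pconst: "polyf (\<lambda>x. c)"
| plin: "linear f \<Longrightarrow> polyf f"
| padd: "polyf f \<Longrightarrow> polyf g \<Longrightarrow> polyf (\<lambda>x. f x + g x)"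
| pmul: "polyf f \<Longrightarrow> polyf g \<Longrightarrow> polyf (\<lambda>x. f x * g x)"

lemma polyf_deriv:
  assumes "polyf f"
  shows "\<exists>f'. (\<forall>x. (f has_derivative f' x) (at x)) \<and> (\<forall>v. polyf (\<lambda>x. f' x v))"
  using assms
proof induction
  case (pconst c) then show ?case by (intro exI[of _ "\<lambda>x v. 0"]) (auto intro: polyf.pconst)
next
  case (plin f) then show ?case
    by (intro exI[of _ "\<lambda>x. f"]) (auto intro: polyf.pconst linear_imp_has_derivative)
next
  case (padd f g)
  then obtain f' g' where f: "\<forall>x. (f has_derivative f' x) (at x)" "\<forall>v. polyf (\<lambda>x. f' x v)"
    and g: "\<forall>x. (g has_derivative g' x) (at x)" "\<forall>v. polyf (\<lambda>x. g' x v)" by blast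
  show ?case
    by (intro exI[of _ "\<lambda>x v. f' x v + g' x v"]) (use f g in \<open>auto intro: has_derivative_add polyf.padd\<close>)
next
  case (pmul f g)
  then obtain f' g' where f: "\<forall>x. (f has_derivative f' x) (at x)" "\<forall>v. polyf (\<lambda>x. f' x v)"
    and g: "\<forall>x. (g has_derivative g' x) (at x)" "\<forall>v. polyf (\<lambda>x. g' x v)" by blast
  show ?case
    by (intro exI[of _ "\<lambda>x v. f x * g' x v + f' x v * g x"])
      (use f g pmul.hyps in \<open>auto intro!: has_derivative_mult polyf.padd polyf.pmul\<close>)
qed

lemma polyf_smooth:
  assumes "polyf (f::'a::euclidean_space \<Rightarrow> real)" shows "smooth_on UNIV f"
  apply (rule smooth_on.coinduct[where X="\<lambda>U g. U = UNIV \<and> polyf g"])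
   apply (simp add: assms)
  subgoal for U g
  proof -
    assume "U = UNIV \<and> polyf g"
    then have U: "U = UNIV" and pf: "polyf g" by auto
    obtain f' where f': "\<forall>x. (g has_derivative f' x) (at x)" "\<forall>v. polyf (\<lambda>x. f' x v)"
      using polyf_deriv[OF pf] by blast
    have fd: "frechet_derivative g (at x) = f' x" for x using frechet_derivative_at f'(1) by metis
    show ?thesis using U f' fd
      by (auto simp: differentiable_on_def differentiable_def)
  qed
  done

lemma linear_smooth:
  assumes "linear (f::'a::euclidean_space \<Rightarrow> 'b::real_normed_vector)" shows "smooth_on UNIV f"
  apply (rule smooth_on.coinduct[where X="\<lambda>U g. U = UNIV \<and> (linear g \<or> (\<exists>c. g = (\<lambda>x. c)))"])
   apply (simp add: assms)
  subgoal for U g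
  proof -
    assume "U = UNIV \<and> (linear g \<or> (\<exists>c. g = (\<lambda>x. c)))"
    then have U: "U = UNIV" and pf: "linear g \<or> (\<exists>c. g = (\<lambda>x. c))" by auto
    show ?thesis
    proof (cases "linear g")
      case True
      have fd: "frechet_derivative g (at x) = g" for x
        using frechet_derivative_at linear_imp_has_derivative[OF True] by metis
      show ?thesis using U True fd
        by (auto simp: differentiable_on_def differentiable_def intro: linear_imp_has_derivative)
    next
      case False
      then obtain c where c: "g = (\<lambda>x. c)" using pf by blast
      have fd: "frechet_derivative g (at x) = (\<lambda>v. 0)" for x
        using frechet_derivative_at has_derivative_const c by metis
      have d: "\<And>x::'a. ((\<lambda>x::'a. c) has_derivative (\<lambda>v. 0)) (at x)" by simp
      show ?thesis using U c fd
        by (auto simp: differentiable_on_def differentiable_def intro!: exI d)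
    qed
  qed
  done

lemma linear_comp_nth: "linear f \<Longrightarrow> linear (\<lambda>x. f x $ i)"
  by (rule linearI) (simp_all add: linear_add linear_scale)

lemma polyf_sum: "finite S \<Longrightarrow> (\<And>i. i \<in> S \<Longrightarrow> polyf (f i)) \<Longrightarrow> polyf (\<lambda>x. \<Sum>i\<in>S. f i x)"
proof (induction S rule: finite_induct)
  case empty then show ?case by (simp add: polyf.pconst)
next
  case (insert a S) then show ?case by (simp add: polyf.padd)
qed

lemma polyf_inner: "linear f \<Longrightarrow> linear g \<Longrightarrow> polyf (\<lambda>x. (f x :: real^'n::finite) \<bullet> g x)"
  unfolding inner_vec_def inner_real_def
  apply (rule polyf_sum, simp)
  apply (rule polyf.pmul)
   apply (rule polyf.plin, erule linear_comp_nth)+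
  done

lemma polyf_scale: "polyf f \<Longrightarrow> polyf (\<lambda>x. c * f x)"
  using polyf.pmul[OF polyf.pconst] by blast

lemma psd_kernel:
  fixes W :: "'a::real_inner \<Rightarrow> 'a"
  assumes lin: "linear W" and sym: "\<And>u w. u \<bullet> W w = W u \<bullet> w"
    and psd: "\<And>y. y \<bullet> W y \<ge> 0" and x0: "x \<bullet> W x = 0"
  shows "W x = 0"
proof -
  have key: "y \<bullet> W x = 0" for y
  proof (rule ccontr)
    assume ne: "y \<bullet> W x \<noteq> 0"
    define a where "a = y \<bullet> W x"
    define b where "b = y \<bullet> W y"
    have b0: "b \<ge> 0" using psd unfolding b_def by simp
    define t where "t = - a / (b + 1)"
    have "(x + t *\<^sub>R y) \<bullet> W (x + t *\<^sub>R y) = 2 * t * a + t\<^sup>2 * b"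
      using x0 sym[of x y] unfolding a_def b_def
      by (simp add: linear_add[OF lin] linear_scale[OF lin] inner_add_left inner_add_right
          power2_eq_square algebra_simps inner_commute)
    also have "\<dots> < 0"
    proof -
      have ts: "t * (b+1) = -a" unfolding t_def using b0 by (simp add: field_simps)
      have "(b+1)\<^sup>2 * (2*t*a + t\<^sup>2*b) = 2*(t*(b+1))*a*(b+1) + (t*(b+1))\<^sup>2*b"
        by (simp add: algebra_simps power2_eq_square)
      also have "\<dots> = -(a\<^sup>2*(b+2))" using ts by (simp add: power2_eq_square algebra_simps)
      also have "\<dots> < 0" using ne b0 unfolding a_def[symmetric] by (simp add: mult_pos_pos)
      finally have "(b+1)\<^sup>2 * (2*t*a + t\<^sup>2*b) < 0" .
      then show ?thesis using b0 by (simp add: mult_less_0_iff)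
    qed
    finally show False using psd[of "x + t *\<^sub>R y"] by simp
  qed
  show ?thesis using key[of "W x"] by simp
qed

lemma min_eig:
  fixes A :: "real^'n::finite^'n"
  assumes sym: "transpose A = A"
  shows "\<exists>v \<mu>. v \<noteq> 0 \<and> A *v v = \<mu> *\<^sub>R v \<and> (\<forall>y. \<mu> * (y \<bullet> y) \<le> y \<bullet> (A *v y))"
proof -
  let ?f = "\<lambda>y::real^'n. y \<bullet> (A *v y)"
  obtain i :: 'n where True by blast
  have "axis i (1::real) \<in> sphere (0::real^'n) 1" by simp
  then have ne: "sphere (0::real^'n) 1 \<noteq> {}" by blast
  have cont: "continuous_on (sphere 0 1) ?f"
    by (intro continuous_intros linear_continuous_on) (auto simp: linear_conv_bounded_linear[symmetric])
  obtain v where v: "v \<in> sphere 0 1" and vmin: "\<forall>y\<in>sphere 0 1. ?f v \<le> ?f y"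
    using continuous_attains_inf[OF compact_sphere ne cont] by blast
  define \<mu> where "\<mu> = ?f v"
  have bound: "\<mu> * (y \<bullet> y) \<le> y \<bullet> (A *v y)" for y
  proof (cases "y = 0")
    case True then show ?thesis by simp
  next
    case False
    define y1 where "y1 = (1 / norm y) *\<^sub>R y"
    have "y1 \<in> sphere 0 1" using False by (simp add: y1_def sphere_def)
    then have "\<mu> \<le> ?f y1" using vmin \<mu>_def by simp
    also have "?f y1 = ?f y / (norm y)\<^sup>2"
      by (simp add: y1_def matrix_vector_mult_scaleR power2_eq_square)
    finally have "\<mu> * (norm y)\<^sup>2 \<le> ?f y" using False by (simp add: field_simps)
    then show ?thesis by (simp add: power2_norm_eq_inner)
  qed
  define W where "W = (\<lambda>y. A *v y - \<mu> *\<^sub>R y)"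
  have linW: "linear W" unfolding W_def
    by (rule linearI) (simp_all add: matrix_vector_right_distrib matrix_vector_mult_scaleR algebra_simps)
  have symW: "u \<bullet> W w = W u \<bullet> w" for u w
    unfolding W_def using sym_inner[OF sym, of u w] by (simp add: inner_diff_left inner_diff_right)
  have psdW: "y \<bullet> W y \<ge> 0" for y using bound[of y] by (simp add: W_def inner_diff_right)
  have "v \<bullet> W v = 0" by (simp add: W_def inner_diff_right \<mu>_def) (use v in \<open>simp add: sphere_def norm_eq_1\<close>)
  then have "W v = 0" using psd_kernel[OF linW symW psdW] by blast
  then have "A *v v = \<mu> *\<^sub>R v" by (simp add: W_def)
  moreover have "v \<noteq> 0" using v by auto
  ultimately show ?thesis using bound by blast
qed

subsection \<open>Polynomials applied to vectors\<close>

definition evalL :: "complex^'n::finite^'n \<Rightarrow> complex poly \<Rightarrow> complex^'n \<Rightarrow> complex^'n" where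
  "evalL L p = fold_coeffs (\<lambda>a f w. a *s w + L *v f w) p (\<lambda>w. 0)"

lemma evalL_0[simp]: "evalL L 0 w = 0" by (simp add: evalL_def)

lemma evalL_pCons[simp]: "evalL L (pCons a p) w = a *s w + L *v evalL L p w"
  by (cases "p = 0 \<and> a = 0") (auto simp add: evalL_def)

lemma cmvm_scale: "(L::complex^'n::finite^'m::finite) *v (c *s v) = c *s (L *v v)"
  by (simp add: vec_eq_iff matrix_vector_mult_def sum_distrib_left algebra_simps)

lemma evalL_add: "evalL L (p + q) w = evalL L p w + evalL L q w"
  by (induction p q rule: poly_induct2) (simp_all add: vector_add_ldistrib matrix_vector_right_distrib algebra_simps)

lemma evalL_smult: "evalL L (smult c p) w = c *s evalL L p w"
  by (induction p) (simp_all add: cmvm_scale vector_add_ldistrib vector_smult_assoc)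

lemma evalL_diff: "evalL L (p - q) w = evalL L p w - evalL L q w"
proof -
  have "evalL L (p - q) w = evalL L (p + smult (-1) q) w" by simp
  also have "\<dots> = evalL L p w + (-1) *s evalL L q w" by (simp only: evalL_add evalL_smult)
  finally show ?thesis by (simp add: vec_eq_iff)
qed

lemma evalL_linfac: "evalL L ([:-r, 1:] * q) w = L *v evalL L q w - r *s evalL L q w"
  by (simp add: evalL_diff evalL_smult)

lemma evalL_monom: "evalL L (monom a j) w = a *s ((\<lambda>v. L *v v) ^^ j) w"
proof (induction j)
  case 0 then show ?case by (simp add: monom_0)
next
  case (Suc j) then show ?case by (simp add: monom_Suc cmvm_scale)
qed

lemma evalL_sum: "finite S \<Longrightarrow> evalL L (\<Sum>i\<in>S. p i) w = (\<Sum>i\<in>S. evalL L (p i) w)"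
  by (induction S rule: finite_induct) (simp_all add: evalL_add)

lemma evalL_R:
  assumes R0: "0 \<in> R" and Radd: "\<And>u w. u \<in> R \<Longrightarrow> w \<in> R \<Longrightarrow> u + w \<in> R"
    and Rscale: "\<And>c u. u \<in> R \<Longrightarrow> c *s u \<in> R" and RL: "\<And>u. u \<in> R \<Longrightarrow> L *v u \<in> R"
    and w: "w \<in> R"
  shows "evalL L p w \<in> R"
  by (induction p) (simp_all add: R0 Radd Rscale RL w)

lemma eig_in_R:
  assumes R0: "0 \<in> R" and Radd: "\<And>u w. u \<in> R \<Longrightarrow> w \<in> R \<Longrightarrow> u + w \<in> R"
    and Rscale: "\<And>c u. u \<in> R \<Longrightarrow> c *s u \<in> R" and RL: "\<And>u. u \<in> R \<Longrightarrow> L *v u \<in> R"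
  shows "p \<noteq> 0 \<Longrightarrow> w \<in> R \<Longrightarrow> w \<noteq> 0 \<Longrightarrow> evalL L p w = 0 \<Longrightarrow>
         \<exists>v c. v \<in> R \<and> v \<noteq> 0 \<and> L *v v = c *s v"
proof (induction "degree p" arbitrary: p w rule: less_induct)
  case less
  show ?case
  proof (cases "degree p = 0")
    case True
    then have "p = [:coeff p 0:]" using degree_0_id by metis
    then have "evalL L p w = coeff p 0 *s w" by (metis evalL_pCons evalL_0 matrix_vector_mult_0_right add_0_right)
    moreover have "coeff p 0 \<noteq> 0" using \<open>p \<noteq> 0\<close> \<open>p = [:coeff p 0:]\<close> by (metis pCons_0_0)
    ultimately show ?thesis using less.prems by simp
  next
    case False
    then obtain r where "poly p r = 0" using False by (metis constant_degree fundamental_theorem_of_algebra)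
    then obtain q where pq: "p = [:-r, 1:] * q" using poly_eq_0_iff_dvd by (metis dvdE)
    have q0: "q \<noteq> 0" using pq less.prems by auto
    have "degree ([:-r,1:] * q) = degree [:-r,1:] + degree q" by (rule degree_mult_eq) (use q0 in auto)
    then have "degree p = 1 + degree q" using pq by simp
    then have dq: "degree q < degree p" by simp
    define v where "v = evalL L q w"
    have vR: "v \<in> R" unfolding v_def by (rule evalL_R[OF R0 Radd Rscale RL less.prems(2)])
    show ?thesis
    proof (cases "v = 0")
      case True
      then have "evalL L q w = 0" using v_def by simp
      then show ?thesis using less.hyps[OF dq q0 less.prems(2,3)] by simp
    next
      case False
      have "L *v v - r *s v = 0" using less.prems(4) unfolding pq evalL_linfac v_def by simp
      then have "L *v v = r *s v" by simp
      then show ?thesis using vR False by blast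
    qed
  qed
qed

lemma ofreal_smult: "(complex_of_real c) *s (v::complex^'n::finite) = c *\<^sub>R v"
  apply (simp add: vec_eq_iff)
  apply (simp add: scaleR_conv_of_real)
  done

lemma dep_poly: "\<exists>p. p \<noteq> 0 \<and> evalL L p (w::complex^'n::finite) = 0"
proof -
  define D where "D = DIM(complex^'n)"
  define f where "f j = ((\<lambda>v. L *v v) ^^ j) w" for j
  show ?thesis
  proof (cases "inj_on f {..D}")
    case False
    then obtain i j where ij: "i \<noteq> j" "f i = f j" by (auto simp: inj_on_def)
    define p where "p = monom (1::complex) i - monom 1 j"
    have "coeff p i = 1" using ij by (simp add: p_def coeff_monom)
    then have "p \<noteq> 0" by auto
    moreover have "evalL L p w = 0"
      unfolding p_def evalL_diff using ij(2) by (simp add: evalL_monom f_def)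
    ultimately show ?thesis by blast
  next
    case True
    let ?S = "f ` {..D}"
    have "card ?S = D + 1" using True by (simp add: card_image)
    then have "dependent ?S" by (intro dependent_biggerset) (simp add: D_def)
    then obtain u where u: "\<exists>v\<in>?S. u v \<noteq> 0" "(\<Sum>v\<in>?S. u v *\<^sub>R v) = 0"
      using real_vector.dependent_finite[of ?S] by auto
    define p where "p = (\<Sum>j\<le>D. monom (complex_of_real (u (f j))) j)"
    obtain j where j: "j \<le> D" "u (f j) \<noteq> 0" using u(1) by auto
    have "coeff p j = complex_of_real (u (f j))"
      unfolding p_def coeff_sum using j(1) by (simp add: coeff_monom)
    then have "p \<noteq> 0" using j(2) by auto
    moreover have "evalL L p w = 0"
    proof -
      have "evalL L p w = (\<Sum>j\<le>D. u (f j) *\<^sub>R f j)"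
        unfolding p_def by (simp add: evalL_sum evalL_monom f_def ofreal_smult)
      also have "\<dots> = (\<Sum>v\<in>?S. u v *\<^sub>R v)" using sum.reindex[OF True, of "\<lambda>v. u v *\<^sub>R v"] by simp
      finally show ?thesis using u(2) by simp
    qed
    ultimately show ?thesis by blast
  qed
qed

definition rv :: "complex^'n::finite \<Rightarrow> real^'n" where "rv v = (\<chi> i. Re (v $ i))"
definition iv :: "complex^'n::finite \<Rightarrow> real^'n" where "iv v = (\<chi> i. Im (v $ i))"
definition cvec :: "real^'n::finite \<Rightarrow> complex^'n" where "cvec e = (\<chi> i. complex_of_real (e $ i))"

lemma rv_cmat: "rv (cmat M *v u) = M *v rv u"
  by (simp add: vec_eq_iff rv_def matrix_vector_mult_def cmat_def)
lemma iv_cmat: "iv (cmat M *v u) = M *v iv u"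
  by (simp add: vec_eq_iff iv_def matrix_vector_mult_def cmat_def)
lemma rv_smult: "rv (c *s v) = Re c *\<^sub>R rv v - Im c *\<^sub>R iv v"
  by (simp add: vec_eq_iff rv_def iv_def)
lemma iv_smult: "iv (c *s v) = Im c *\<^sub>R rv v + Re c *\<^sub>R iv v"
  by (simp add: vec_eq_iff rv_def iv_def)
lemma cvec_eq_0: "v = 0 \<longleftrightarrow> rv v = 0 \<and> iv v = 0"
  by (auto simp: vec_eq_iff rv_def iv_def complex_eq_iff)
lemma rv_cvec[simp]: "rv (cvec e) = e" by (simp add: vec_eq_iff rv_def cvec_def)

lemma cmat_mult: "cmat (A ** B) = cmat A ** cmat B"
  by (simp add: vec_eq_iff cmat_def matrix_matrix_mult_def)

lemma no_psd:
  fixes A1 :: "real^('n::finite+'n)^('n+'n)" and W M :: "real^('n+'n)^('n+'n)"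
  assumes hyp: "J_hyperbolic A1" and symW: "transpose W = W" and psd: "\<forall>y. 0 \<le> y \<bullet> (W *v y)"
    and comm: "(Jmat ** A1) ** W = W ** M"
    and skew: "\<forall>x. x \<bullet> ((Jmat ** A1) *v (W *v x)) = 0"
  shows "W = 0"
proof (rule ccontr)
  assume W0: "W \<noteq> 0"
  define L where "L = Jmat ** A1"
  define R where "R = range (\<lambda>u. cmat W *v u)"
  have R0: "0 \<in> R" unfolding R_def by (auto intro!: image_eqI[of _ _ 0])
  have Radd: "u + w \<in> R" if "u \<in> R" "w \<in> R" for u w
    using that unfolding R_def by (auto simp: matrix_vector_right_distrib[symmetric])
  have Rscale: "c *s u \<in> R" if "u \<in> R" for c u
    using that unfolding R_def by (auto simp: cmvm_scale[symmetric])
  have RL: "cmat L *v u \<in> R" if uR: "u \<in> R" for u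
  proof -
    obtain x where x: "u = cmat W *v x" using uR R_def by auto
    have "cmat L *v u = cmat W *v (cmat M *v x)"
      unfolding x matrix_vector_mul_assoc cmat_mult[symmetric] L_def comm ..
    then show ?thesis unfolding R_def by auto
  qed
  obtain e where e: "W *v e \<noteq> 0"
    using W0 matrix_eq[of W 0] by auto
  define w0 where "w0 = cmat W *v cvec e"
  have w0R: "w0 \<in> R" unfolding w0_def R_def by auto
  have w00: "w0 \<noteq> 0" using e unfolding w0_def by (auto simp: cvec_eq_0 rv_cmat)
  obtain p where p: "p \<noteq> 0" "evalL (cmat L) p w0 = 0" using dep_poly by blast
  obtain v c where v: "v \<in> R" "v \<noteq> 0" "cmat L *v v = c *s v"
    using eig_in_R[OF R0 Radd Rscale RL p(1) w0R w00 p(2)] by blast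
  obtain u where u: "v = cmat W *v u" using v(1) R_def by auto
  define a where "a = rv u"
  define b where "b = iv u"
  have ra: "rv v = W *v a" "iv v = W *v b" unfolding u a_def b_def by (simp_all add: rv_cmat iv_cmat)
  have e1: "L *v (W *v a) = Re c *\<^sub>R (W *v a) - Im c *\<^sub>R (W *v b)"
    using arg_cong[OF v(3), of rv] ra by (simp add: rv_cmat rv_smult)
  have e2: "L *v (W *v b) = Im c *\<^sub>R (W *v a) + Re c *\<^sub>R (W *v b)"
    using arg_cong[OF v(3), of iv] ra by (simp add: iv_cmat iv_smult)
  have s1: "a \<bullet> (L *v (W *v a)) = 0" "b \<bullet> (L *v (W *v b)) = 0" using skew L_def by auto
  have ab: "a \<bullet> (W *v b) = b \<bullet> (W *v a)" using sym_inner[OF symW, of a b] by (simp add: inner_commute)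
  have "Re c * (a \<bullet> (W *v a)) - Im c * (a \<bullet> (W *v b)) = 0" using s1(1) e1 by (simp add: inner_diff_right)
  moreover have "Im c * (b \<bullet> (W *v a)) + Re c * (b \<bullet> (W *v b)) = 0" using s1(2) e2 by (simp add: inner_add_right)
  ultimately have sum0: "Re c * (a \<bullet> (W *v a) + b \<bullet> (W *v b)) = 0" using ab by (simp add: algebra_simps)
  have linW: "linear (\<lambda>y. W *v y)" by simp
  have symWf: "\<And>x y. x \<bullet> (W *v y) = (W *v x) \<bullet> y" using sym_inner[OF symW] by blast
  have psdW: "\<And>y. 0 \<le> y \<bullet> (W *v y)" using psd by blast
  have "Re c = 0"
  proof (rule ccontr)
    assume "Re c \<noteq> 0"
    then have "a \<bullet> (W *v a) + b \<bullet> (W *v b) = 0" using sum0 by simp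
    then have "a \<bullet> (W *v a) = 0" "b \<bullet> (W *v b) = 0" using psdW[of a] psdW[of b] by linarith+
    then have "W *v a = 0" "W *v b = 0" using psd_kernel[OF linW symWf psdW] by blast+
    then have "v = 0" using ra cvec_eq_0 by metis
    then show False using v(2) by simp
  qed
  then have "c = \<i> * complex_of_real (Im c)" by (simp add: complex_eq_iff)
  then have "cmat (Jmat ** A1) *v v = (\<i> * complex_of_real (Im c)) *s v" using v(3) L_def by simp
  then have "v = 0" using hyp unfolding J_hyperbolic_def by blast
  then show False using v(2) by simp
qed

lemma frob: "(a::real^'n::finite^'m::finite) \<bullet> X = (\<Sum>i\<in>UNIV. \<Sum>j\<in>UNIV. a$i$j * X$i$j)"
  by (simp add: inner_vec_def inner_real_def)

lemma frob_mult: "(a::real^'n::finite^'n) \<bullet> (B ** S) = (transpose B ** a) \<bullet> S"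
proof -
  have "a \<bullet> (B ** S) = (\<Sum>i\<in>UNIV. \<Sum>j\<in>UNIV. \<Sum>k\<in>UNIV. a$i$j * B$i$k * S$k$j)"
    by (simp add: frob matrix_matrix_mult_def sum_distrib_left mult.assoc)
  also have "\<dots> = (\<Sum>i\<in>UNIV. \<Sum>k\<in>UNIV. \<Sum>j\<in>UNIV. a$i$j * B$i$k * S$k$j)"
    by (rule sum.cong[OF refl], rule sum.swap)
  also have "\<dots> = (\<Sum>k\<in>UNIV. \<Sum>i\<in>UNIV. \<Sum>j\<in>UNIV. a$i$j * B$i$k * S$k$j)"
    by (rule sum.swap)
  also have "\<dots> = (\<Sum>k\<in>UNIV. \<Sum>j\<in>UNIV. \<Sum>i\<in>UNIV. a$i$j * B$i$k * S$k$j)"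
    by (rule sum.cong[OF refl], rule sum.swap)
  also have "\<dots> = (transpose B ** a) \<bullet> S"
    by (simp add: frob matrix_matrix_mult_def transpose_def sum_distrib_left mult.commute mult.left_commute)
  finally show ?thesis .
qed

lemma frob_transpose: "(a::real^'n::finite^'n) \<bullet> transpose X = transpose a \<bullet> X"
proof -
  have "a \<bullet> transpose X = (\<Sum>i\<in>UNIV. \<Sum>j\<in>UNIV. a$i$j * X$j$i)" by (simp add: frob transpose_def)
  also have "\<dots> = (\<Sum>j\<in>UNIV. \<Sum>i\<in>UNIV. a$i$j * X$j$i)" by (rule sum.swap)
  also have "\<dots> = transpose a \<bullet> X" by (simp add: frob transpose_def)
  finally show ?thesis .
qed

definition outer :: "real^'n::finite \<Rightarrow> real^'n^'n" where "outer y = (\<chi> i j. y$i * y$j)"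

lemma outer_mult: "outer y *v z = (y \<bullet> z) *\<^sub>R y"
  by (simp add: vec_eq_iff outer_def matrix_vector_mult_def inner_vec_def sum_distrib_left mult.commute mult.left_commute)

lemma frob_outer: "(a::real^'n::finite^'n) \<bullet> outer y = y \<bullet> (a *v y)"
  by (simp add: frob outer_def inner_vec_def matrix_vector_mult_def sum_distrib_left mult.commute mult.left_commute)

lemma transpose_add': "transpose (A + B) = transpose A + transpose (B::real^'n::finite^'n)"
  by (simp add: vec_eq_iff transpose_def)

lemma mat_add_mult: "(X + Y) *v z = X *v z + Y *v (z::real^'n::finite)"
  by (simp add: matrix_vector_mult_add_rdistrib)

lemma lin_bound: assumes "\<forall>t::real. 0 \<le> c + t * d" shows "d = 0"
proof (rule ccontr)
  assume "d \<noteq> 0"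
  then have "(-(\<bar>c\<bar>+1)/d) * d = -(\<bar>c\<bar>+1)" by simp
  then show False using assms[rule_format, of "-(\<bar>c\<bar>+1)/d"] by linarith
qed

lemma lin_bound_pos: assumes "\<forall>t::real\<ge>0. 0 \<le> c + t * d" shows "0 \<le> d"
proof (rule ccontr)
  assume "\<not> 0 \<le> d"
  then have d: "d < 0" by simp
  then have "((\<bar>c\<bar>+1)/(-d)) * d = -(\<bar>c\<bar>+1)" by simp
  moreover have "(\<bar>c\<bar>+1)/(-d) \<ge> 0" using d by (intro divide_nonneg_pos) auto
  ultimately show False using assms[rule_format, of "(\<bar>c\<bar>+1)/(-d)"] by linarith
qed

lemma neg_mvm: "(- M) *v (z::real^'n::finite) = - ((M::real^'n^'m::finite) *v z)"
  by (simp add: vec_eq_iff matrix_vector_mult_def sum_negf[symmetric])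

lemma inertia:
  fixes A1 :: "real^('n::finite+'n)^('n+'n)"
  assumes hyp: "J_hyperbolic A1" and symA: "transpose A1 = A1"
  shows "\<exists>S. transpose S = S \<and> (\<forall>y. y \<bullet> y \<le> y \<bullet> (A1 *v (Jmat *v (S *v y))))"
proof (rule ccontr)
  assume nex: "\<not> ?thesis"
  define B where "B = A1 ** Jmat"
  define T where "T S = B ** S + transpose (B ** S)" for S :: "real^('n+'n)^('n+'n)"
  define P where "P = {X::real^('n+'n)^('n+'n). \<forall>y. y \<bullet> y \<le> y \<bullet> (X *v y)}"
  define V where "V = {T S | S. transpose S = S}"
  have Tq: "y \<bullet> (T S *v y) = 2 * (y \<bullet> (A1 *v (Jmat *v (S *v y))))" for S y
  proof -
    have "y \<bullet> (transpose (B ** S) *v y) = y \<bullet> ((B ** S) *v y)"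
      using inner_transpose[of y "transpose (B ** S)" y] by (simp add: inner_commute)
    then show ?thesis unfolding T_def B_def
      by (simp add: mat_add_mult inner_add_right matrix_vector_mul_assoc[symmetric])
  qed
  have disj: "X \<notin> V" if "X \<in> P" for X
  proof
    assume "X \<in> V"
    then obtain S where S: "X = T S" "transpose S = S" unfolding V_def by auto
    have "y \<bullet> y \<le> y \<bullet> (A1 *v (Jmat *v ((2 *\<^sub>R S) *v y)))" for y
    proof -
      have "y \<bullet> y \<le> y \<bullet> (T S *v y)" using that S unfolding P_def by blast
      then show ?thesis using Tq[where S=S and y=y]
        by (simp add: scaleR_matrix_vector_assoc[symmetric] matrix_vector_mult_scaleR)
    qed
    moreover have "transpose (2 *\<^sub>R S) = 2 *\<^sub>R S" using S by (simp add: transpose_scalar)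
    ultimately show False using nex by blast
  qed
  have TL: "T (u *\<^sub>R S1 + v *\<^sub>R S2) = u *\<^sub>R T S1 + v *\<^sub>R T S2" for u v S1 S2
    unfolding T_def by (simp add: matrix_add_ldistrib matrix_scalar_ac scalar_matrix_assoc[symmetric] transpose_add' transpose_scalar algebra_simps)
  have cP: "convex P" unfolding convex_def P_def
  proof (intro ballI allI impI, safe)
    fix X Y :: "real^('n+'n)^('n+'n)" and u v :: real and y
    assume X: "\<forall>y. y \<bullet> y \<le> y \<bullet> (X *v y)" and Y: "\<forall>y. y \<bullet> y \<le> y \<bullet> (Y *v y)"
      and u: "0 \<le> u" and v: "0 \<le> v" and uv: "u + v = 1"
    have "y \<bullet> ((u *\<^sub>R X + v *\<^sub>R Y) *v y) = u * (y \<bullet> (X *v y)) + v * (y \<bullet> (Y *v y))"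
      by (simp add: mat_add_mult scaleR_matrix_vector_assoc[symmetric] inner_add_right)
    also have "\<dots> \<ge> u * (y \<bullet> y) + v * (y \<bullet> y)"
      using X Y u v by (intro add_mono mult_left_mono) auto
    finally have h: "u * (y \<bullet> y) + v * (y \<bullet> y) \<le> y \<bullet> ((u *\<^sub>R X + v *\<^sub>R Y) *v y)" .
    have "u * (y \<bullet> y) + v * (y \<bullet> y) = y \<bullet> y" using uv by (simp add: distrib_right[symmetric])
    then show "y \<bullet> y \<le> y \<bullet> ((u *\<^sub>R X + v *\<^sub>R Y) *v y)" using h by linarith
  qed
  have cV: "convex V" unfolding convex_def V_def
  proof (intro ballI allI impI, safe)
    fix S1 S2 :: "real^('n+'n)^('n+'n)" and u v :: real
    assume "transpose S1 = S1" "transpose S2 = S2"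
    then have "transpose (u *\<^sub>R S1 + v *\<^sub>R S2) = u *\<^sub>R S1 + v *\<^sub>R S2" by (simp add: transpose_add' transpose_scalar)
    then show "\<exists>S. u *\<^sub>R T S1 + v *\<^sub>R T S2 = T S \<and> transpose S = S" using TL by metis
  qed
  define C where "C = (\<Union>p\<in>P. \<Union>v\<in>V. {p - v})"
  have cC: "convex C" unfolding C_def by (rule convex_differences[OF cP cV])
  have C0: "0 \<notin> C" unfolding C_def using disj by auto
  obtain a where a: "a \<noteq> 0" "\<forall>x\<in>C. 0 \<le> a \<bullet> x" using separating_hyperplane_set_0[OF cC C0] by blast
  have IP: "mat 1 \<in> P" unfolding P_def by simp
  have T0: "T 0 = 0" unfolding T_def by (simp add: vec_eq_iff transpose_def matrix_matrix_mult_def)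
  have V0: "0 \<in> V" unfolding V_def using T0 by (auto intro!: exI[of _ 0] simp: vec_eq_iff transpose_def)
  have aP: "0 \<le> a \<bullet> X" if "X \<in> P" for X using a(2) that V0 unfolding C_def by force
  have aV: "a \<bullet> T S = 0" if "transpose S = S" for S
  proof -
    have "0 \<le> a \<bullet> mat 1 + t * (- (a \<bullet> T S))" for t
    proof -
      have "T (t *\<^sub>R S) \<in> V" unfolding V_def using that by (auto simp: transpose_scalar)
      then have "mat 1 - T (t *\<^sub>R S) \<in> C" unfolding C_def using IP by blast
      moreover have "T (t *\<^sub>R S) = t *\<^sub>R T S" using TL[of t S 0 S] by simp
      ultimately show ?thesis using a(2) by (auto simp: inner_diff_right)
    qed
    then show ?thesis using lin_bound[of "a \<bullet> mat 1" "- (a \<bullet> T S)"] by simp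
  qed
  define K where "K = a - transpose a"
  have aK: "a \<bullet> K = 0"
  proof -
    have yK: "y \<bullet> (K *v y) = 0" for y
      using inner_transpose[of y "transpose a" y] unfolding K_def
      by (simp add: matrix_vector_mult_diff_rdistrib inner_diff_right inner_commute)
    have mP: "mat 1 + t *\<^sub>R K \<in> P" for t
      unfolding P_def by (simp add: mat_add_mult scaleR_matrix_vector_assoc[symmetric] inner_add_right yK)
    have "0 \<le> a \<bullet> mat 1 + t * (a \<bullet> K)" for t using aP[OF mP[of t]] by (simp add: inner_add_right)
    then show ?thesis using lin_bound by blast
  qed
  have symAa: "transpose a = a"
  proof -
    have "(a - transpose a) \<bullet> (a - transpose a) = 2 * (a \<bullet> K)"
      using frob_transpose[of "transpose a" a]
      unfolding K_def by (simp add: inner_diff_left inner_diff_right inner_commute)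
    then have "a - transpose a = 0" using aK by simp
    then show ?thesis by simp
  qed
  have psd: "\<forall>y. 0 \<le> y \<bullet> (a *v y)"
  proof
    fix y :: "real^('n+'n)"
    have mP: "mat 1 + t *\<^sub>R outer y \<in> P" if "t \<ge> 0" for t
      unfolding P_def using that
      by (simp add: mat_add_mult scaleR_matrix_vector_assoc[symmetric] inner_add_right outer_mult inner_commute[of _ y] mult.assoc)
    have "\<forall>t\<ge>0. 0 \<le> a \<bullet> mat 1 + t * (a \<bullet> outer y)"
      using aP[OF mP] by (simp add: inner_add_right)
    then show "0 \<le> y \<bullet> (a *v y)" using lin_bound_pos frob_outer by metis
  qed
  define N where "N = transpose B ** a"
  have NS: "N \<bullet> S = 0" if "transpose S = S" for S
  proof -
    have "a \<bullet> T S = 2 * (N \<bullet> S)"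
      unfolding T_def N_def using frob_transpose[of a "B ** S"] symAa
      by (simp add: inner_add_right frob_mult)
    then show ?thesis using aV[OF that] by simp
  qed
  have "N \<bullet> (N + transpose N) = 0" by (rule NS) (simp add: transpose_add')
  moreover have "(N + transpose N) \<bullet> (N + transpose N) = 2 * (N \<bullet> (N + transpose N))"
    using frob_transpose[of "transpose N" N]
    by (simp add: inner_add_left inner_add_right inner_commute)
  ultimately have NT0: "N + transpose N = 0" by simp
  have NN: "N *v x + transpose N *v x = 0" for x
    using arg_cong[where f="\<lambda>M. M *v x", OF NT0] by (simp only: mat_add_mult matrix_vector_mult_0)
  have tB: "transpose B = (- Jmat) ** A1" unfolding B_def by (simp add: matrix_transpose_mul symA transpose_Jmat)
  have tN: "transpose N = a ** B" unfolding N_def by (simp add: matrix_transpose_mul symAa)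
  have cm: "Jmat *v (A1 *v (a *v x)) = a *v (A1 *v (Jmat *v x))" for x
  proof -
    have h0: "(transpose B ** a) *v x + (a ** B) *v x = 0" using NN[of x] tN unfolding N_def by metis
    have h1: "(transpose B ** a) *v x = - (Jmat *v (A1 *v (a *v x)))"
      unfolding tB by (simp only: matrix_vector_mul_assoc[symmetric] neg_mvm)
    have h2: "(a ** B) *v x = a *v (A1 *v (Jmat *v x))"
      unfolding B_def by (simp only: matrix_vector_mul_assoc[symmetric])
    show ?thesis using h0 h1 h2 by (simp add: algebra_simps)
  qed
  have comm: "(Jmat ** A1) ** a = a ** (A1 ** Jmat)"
    by (rule matrix_eq[THEN iffD2]) (simp add: matrix_vector_mul_assoc[symmetric] cm)
  have skew: "\<forall>x. x \<bullet> ((Jmat ** A1) *v (a *v x)) = 0"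
  proof
    fix x :: "real^('n+'n)"
    have e1: "x \<bullet> ((Jmat ** A1) *v (a *v x)) = - ((Jmat *v x) \<bullet> (A1 *v (a *v x)))"
      by (simp add: matrix_vector_mul_assoc[symmetric] Jmat_inner_swap)
    have "x \<bullet> ((Jmat ** A1) *v (a *v x)) = x \<bullet> (a *v (A1 *v (Jmat *v x)))"
      by (simp add: matrix_vector_mul_assoc[symmetric] cm)
    also have "\<dots> = (A1 *v (a *v x)) \<bullet> (Jmat *v x)"
      using sym_inner[OF symAa] sym_inner[OF symA] by metis
    finally show "x \<bullet> ((Jmat ** A1) *v (a *v x)) = 0" using e1 by (simp add: inner_commute)
  qed
  have "a = 0" by (rule no_psd[OF hyp symAa psd comm skew])
  then show False using a(1) by simp
qed

definition Qf :: "real^'n::finite^'n \<Rightarrow> real^'n \<Rightarrow> real" where "Qf B y = y \<bullet> (B *v y)"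
definition Dm :: "real^'n::finite^'n \<Rightarrow> real^'n^'n \<Rightarrow> real^'n^'n" where
  "Dm L B = - (B ** L + transpose L ** B)"

lemma Q_deriv: "(Qf B has_derivative (\<lambda>u. y \<bullet> (B *v u) + u \<bullet> (B *v y))) (at y)"
  unfolding Qf_def
  by (rule has_derivative_inner[OF has_derivative_ident bounded_linear.has_derivative[OF matrix_vector_mul_bounded_linear has_derivative_ident]])

lemma transpose_neg: "transpose (- X) = - transpose (X::real^'n::finite^'n)"
  by (simp add: vec_eq_iff transpose_def)

lemma transpose_diff': "transpose (A - B) = transpose A - transpose (B::real^'n::finite^'n)"
  by (simp add: vec_eq_iff transpose_def)

lemma Dm_sym: "transpose B = B \<Longrightarrow> transpose (Dm L B) = Dm L B"
  unfolding Dm_def by (simp add: transpose_neg transpose_add' transpose_diff' matrix_transpose_mul algebra_simps)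

lemma Q_D:
  assumes "transpose B = B"
  shows "y \<bullet> (B *v (- (L *v y))) + (- (L *v y)) \<bullet> (B *v y) = Qf (Dm L B) y"
proof -
  have a: "y \<bullet> (transpose L *v (B *v y)) = y \<bullet> (B *v (L *v y))"
    using inner_transpose[of y "transpose L" "B *v y"] sym_inner[OF assms, of "L *v y" y]
    by (simp add: inner_commute del: transpose_matrix_vector)
  have b: "(L *v y) \<bullet> (B *v y) = y \<bullet> (B *v (L *v y))"
    using sym_inner[OF assms, of "L *v y" y] by (simp add: inner_commute)
  show ?thesis unfolding Qf_def Dm_def
    using a b by (simp add: neg_mvm mvm_minus mat_add_mult matrix_vector_mult_diff_rdistrib
        matrix_vector_mul_assoc[symmetric] inner_add_right inner_diff_right del: transpose_matrix_vector)
qed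

lemma QQ_deriv: "((\<lambda>y. Qf B y * Qf C y) has_derivative
   (\<lambda>u. Qf B y * (y \<bullet> (C *v u) + u \<bullet> (C *v y)) + (y \<bullet> (B *v u) + u \<bullet> (B *v y)) * Qf C y)) (at y)"
  by (rule has_derivative_mult[OF Q_deriv Q_deriv])

lemma Q_bound: "\<exists>K\<ge>0. \<forall>y. \<bar>Qf B y\<bar> \<le> K * (y \<bullet> y)"
proof -
  obtain K where K: "\<And>x. norm (B *v x) \<le> norm x * K" "K > 0"
    using bounded_linear.pos_bounded[OF matrix_vector_mul_bounded_linear[of B]] by blast
  have "\<bar>Qf B y\<bar> \<le> K * (y \<bullet> y)" for y
  proof -
    have "\<bar>Qf B y\<bar> \<le> norm y * norm (B *v y)" unfolding Qf_def by (rule Cauchy_Schwarz_ineq2)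
    also have "\<dots> \<le> norm y * (norm y * K)" by (rule mult_left_mono[OF K(1)]) simp
    also have "\<dots> = K * (y \<bullet> y)" by (simp add: power2_norm_eq_inner[symmetric] power2_eq_square)
    finally show ?thesis .
  qed
  then show ?thesis using K(2) by (intro exI[of _ K]) auto
qed

lemma poisson_XY:
  fixes H :: "real^(('m::finite+'k::finite)+('m+'k)) \<Rightarrow> real" and Af
  assumes HD: "(H has_derivative (\<lambda>u. u \<bullet> (Af *v z))) (at z)"
    and XAf: "projX (Af *v z) = A0 *v projX z" and YAf: "projY (Af *v z) = A1 *v projY z"
    and psi: "(\<psi> has_derivative \<psi>') (at (projX z))" "linear \<psi>'"
    and phi: "(\<phi> has_derivative \<phi>') (at (projY z))" "linear \<phi>'"
  shows "poisson H (\<lambda>z. \<psi> (projX z) + \<phi> (projY z)) z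
       = \<psi>' (- (Jmat *v (A0 *v projX z))) + \<phi>' (- (Jmat *v (A1 *v projY z)))"
proof -
  have d1: "((\<lambda>z. \<psi> (projX z)) has_derivative (\<lambda>u. \<psi>' (projX u))) (at z)"
    by (rule has_derivative_compose[OF linear_imp_has_derivative[OF linear_projX] psi(1)])
  have d2: "((\<lambda>z. \<phi> (projY z)) has_derivative (\<lambda>u. \<phi>' (projY u))) (at z)"
    by (rule has_derivative_compose[OF linear_imp_has_derivative[OF linear_projY] phi(1)])
  have lin: "linear (\<lambda>u. \<psi>' (projX u) + \<phi>' (projY u))"
    using psi(2) phi(2) linear_projX linear_projY
    by (intro linear_compose_add) (auto intro: linear_compose[unfolded o_def])
  show ?thesis
    using poisson_eq[OF HD has_derivative_add[OF d1 d2] lin]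
    by (simp add: XAf YAf projX_J projY_J mvm_minus)
qed

lemma key_ineq:
  fixes G p p2 n n2 N d Kn K2 Kn2 :: real
  assumes N: "N > 0" and p: "p \<ge> 2 * N" and p2: "\<bar>p2\<bar> \<le> K2 * N" and n: "\<bar>n\<bar> \<le> Kn * N"
    and n2: "\<bar>n2\<bar> \<le> Kn2 * N" and K: "Kn \<ge> 0" "K2 \<ge> 0" "Kn2 \<ge> 0"
    and d: "d = 1 / (Kn * K2 + Kn2 + 1)" and eq: "G * p + d * (N * n) = 0"
  shows "p * p + G * p2 + d * (n * n + N * n2) > 0"
proof -
  have "Kn * K2 \<ge> 0" using K by simp
  then have den: "Kn * K2 + Kn2 + 1 > 0" using K by linarith
  have d0: "d > 0" using den d by simp
  have d1: "d * (Kn * K2 + Kn2 + 1) = 1" using den d by simp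
  have pp: "p > 0" using p N by simp
  have "\<bar>G\<bar> * p = d * N * \<bar>n\<bar>"
  proof -
    have "\<bar>G * p\<bar> = \<bar>d * (N * n)\<bar>" using eq by (simp add: eq_neg_iff_add_eq_0)
    then show ?thesis using pp d0 N by (simp add: abs_mult mult.assoc)
  qed
  also have "\<dots> \<le> d * N * (Kn * N)" using n d0 N by (intro mult_left_mono) auto
  finally have g1: "\<bar>G\<bar> * p \<le> d * N * (Kn * N)" .
  have "\<bar>G\<bar> * (2 * N) \<le> \<bar>G\<bar> * p" using p by (intro mult_left_mono) auto
  with g1 have "\<bar>G\<bar> * (2 * N) \<le> (d * Kn * N) * N" by (simp add: algebra_simps)
  then have gb: "\<bar>G\<bar> * 2 \<le> d * Kn * N" using N by (simp add: mult.assoc[symmetric] mult_le_cancel_right)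
  have t1: "p * p \<ge> 4 * (N * N)"
  proof -
    have "(2*N) * (2*N) \<le> p * p" using p N by (intro mult_mono) auto
    then show ?thesis by simp
  qed
  have t2: "G * p2 \<ge> - ((d * Kn * N) * (K2 * N)) / 2"
  proof -
    have "\<bar>G * p2\<bar> = \<bar>G\<bar> * \<bar>p2\<bar>" by (simp add: abs_mult)
    also have "\<dots> \<le> ((d * Kn * N) / 2) * (K2 * N)" using gb p2 by (intro mult_mono) auto
    finally show ?thesis by (simp add: abs_le_iff)
  qed
  have t3: "d * (n * n + N * n2) \<ge> - (d * Kn2 * (N * N))"
  proof -
    have "- (Kn2 * N) \<le> n2" using n2 by (simp add: abs_le_iff)
    then have a: "N * (- (Kn2 * N)) \<le> N * n2" using N by (intro mult_left_mono) auto
    have b: "n * n \<ge> 0" by simp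
    have c: "N * (- (Kn2 * N)) = - (Kn2 * (N * N))" by (simp add: mult_ac)
    have "n * n + N * n2 \<ge> - (Kn2 * (N * N))" using a b c by linarith
    then have "d * (n * n + N * n2) \<ge> d * (- (Kn2 * (N * N)))" using d0 by (intro mult_left_mono) auto
    then show ?thesis by (simp add: mult_ac)
  qed
  have "d * (Kn * K2) / 2 + d * Kn2 \<le> 1"
  proof -
    have "d * (Kn * K2) / 2 \<le> d * (Kn * K2)" using d0 K by simp
    moreover have "d * (Kn * K2) + d * Kn2 + d = 1" using d1 by (simp add: distrib_left)
    ultimately show ?thesis using d0 by linarith
  qed
  then have m: "(d * (Kn * K2) / 2 + d * Kn2) * (N * N) \<le> 1 * (N * N)" using N by (intro mult_right_mono) auto
  have e2: "- ((d * Kn * N) * (K2 * N)) / 2 = - (d * (Kn * K2) / 2 * (N * N))" by (simp add: mult_ac)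
  have e3: "(d * (Kn * K2) / 2 + d * Kn2) * (N * N) = d * (Kn * K2) / 2 * (N * N) + d * Kn2 * (N * N)"
    by (simp add: distrib_right)
  have "p * p + G * p2 + d * (n * n + N * n2) \<ge> 3 * (N * N)"
    using t1 t2 t3 m e2 e3 by linarith
  moreover have "N * N > 0" using N by simp
  ultimately show ?thesis by linarith
qed

lemma transpose_zero: "transpose (0::real^'n::finite^'n) = 0"
  by (simp add: vec_eq_iff transpose_def)

lemma quad_deriv:
  fixes B :: "real^'n::finite^'n"
  assumes "transpose B = B"
  shows "((\<lambda>z. 1/2 * (z \<bullet> (B *v z)) - c) has_derivative (\<lambda>u. u \<bullet> (B *v z))) (at z)"
proof -
  have d: "((\<lambda>z. 1/2 * Qf B z - c) has_derivative (\<lambda>u. 1/2 * (z \<bullet> (B *v u) + u \<bullet> (B *v z)) - 0)) (at z)"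
    by (intro has_derivative_diff has_derivative_mult_right Q_deriv has_derivative_const)
  have "(\<lambda>u. 1/2 * (z \<bullet> (B *v u) + u \<bullet> (B *v z)) - 0) = (\<lambda>u. u \<bullet> (B *v z))"
    using sym_inner[OF assms, of z] by (auto simp: inner_commute)
  then show ?thesis using d unfolding Qf_def by simp
qed

lemma Y_field:
  fixes S :: "real^('k::finite+'k)^('k+'k)" and t :: real
  assumes symS: "transpose S = S"
  defines "Y \<equiv> \<lambda>z::real^(('m::finite+'k)+('m+'k)). (1/2) *\<^sub>R z + t *\<^sub>R (Jmat *v (blk 0 S *v z))"
  shows "liouville Y" "asymp_regular Y" "\<And>z. projX (Y z) = (1/2) *\<^sub>R projX z"
    "\<And>z. projY (Y z) = (1/2) *\<^sub>R projY z + t *\<^sub>R (Jmat *v (S *v projY z))"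
proof -
  have linY: "linear Y" unfolding Y_def
    by (rule linearI) (simp_all add: matrix_vector_right_distrib matrix_vector_mult_scaleR algebra_simps)
  have fd: "frechet_derivative Y (at x) = Y" for x
    using frechet_derivative_at linear_imp_has_derivative[OF linY] by metis
  have symS': "transpose (blk (0::real^('m+'m)^('m+'m)) S) = blk 0 S" by (rule blk_sym) (simp_all add: transpose_zero symS)
  have om: "omega0 (Y u) v + omega0 u (Y v) = omega0 u v" for u v
  proof -
    have "omega0 (Y u) v = 1/2 * omega0 u v + t * ((blk 0 S *v u) \<bullet> v)"
      unfolding Y_def omega0_def by (simp add: inner_add_left Jmat_orth)
    moreover have "omega0 u (Y v) = 1/2 * omega0 u v - t * (u \<bullet> (blk 0 S *v v))"
      unfolding Y_def omega0_def
      by (simp add: matrix_vector_right_distrib matrix_vector_mult_scaleR inner_add_right inner_diff_right Jmat_J)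
    moreover have "(blk 0 S *v u) \<bullet> v = u \<bullet> (blk 0 S *v v)" using sym_inner[OF symS'] by metis
    ultimately show ?thesis by simp
  qed
  show "liouville Y" unfolding liouville_def fd using linear_smooth[OF linY] om by blast
  have bl: "bounded_linear Y" using linY linear_conv_bounded_linear by blast
  show "asymp_regular Y" unfolding asymp_regular_def fd
    using onorm_pos_le[OF bl] by (intro exI[of _ "onorm Y + 1"]) auto
  show "\<And>z. projX (Y z) = (1/2) *\<^sub>R projX z" unfolding Y_def by (simp add: projX_J)
  show "\<And>z. projY (Y z) = (1/2) *\<^sub>R projY z + t *\<^sub>R (Jmat *v (S *v projY z))" unfolding Y_def by (simp add: projY_J)
qed

definition DV :: "real^'n::finite^'n \<Rightarrow> (real^'n \<Rightarrow> real) \<Rightarrow> real^'n \<Rightarrow> real \<Rightarrow> bool" where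
  "DV L f y a \<longleftrightarrow> (\<exists>D. (f has_derivative D) (at y) \<and> linear D \<and> D (- (L *v y)) = a)"

lemma DV_add: "DV L f y a \<Longrightarrow> DV L g y b \<Longrightarrow> DV L (\<lambda>y. f y + g y) y (a + b)"
  unfolding DV_def by (auto intro!: has_derivative_add linear_compose_add)

lemma DV_cmult: "DV L f y a \<Longrightarrow> DV L (\<lambda>y. c * f y) y (c * a)"
  unfolding DV_def
proof (elim exE conjE)
  fix D assume d: "(f has_derivative D) (at y)" "linear D" "D (- (L *v y)) = a"
  have "linear (\<lambda>u. c * D u)" using d(2)
    by (intro linearI) (simp_all add: linear_add linear_scale algebra_simps)
  then show "\<exists>D. ((\<lambda>y. c * f y) has_derivative D) (at y) \<and> linear D \<and> D (- (L *v y)) = c * a"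
    using d by (intro exI[of _ "\<lambda>u. c * D u"]) (auto intro!: has_derivative_mult_right)
qed

lemma lin_QQ: "linear (\<lambda>u. Qf B y * (y \<bullet> (C *v u) + u \<bullet> (C *v y)) + (y \<bullet> (B *v u) + u \<bullet> (B *v y)) * Qf C y)"
  by (rule linearI) (simp_all add: matrix_vector_right_distrib matrix_vector_mult_scaleR inner_add_left inner_add_right algebra_simps)

lemma DV_QQ:
  assumes "transpose B = B" "transpose C = C"
  shows "DV L (\<lambda>y. Qf B y * Qf C y) y (Qf B y * Qf (Dm L C) y + Qf (Dm L B) y * Qf C y)"
  unfolding DV_def
  by (intro exI conjI, rule QQ_deriv, rule lin_QQ) (simp add: Q_D[OF assms(1), symmetric] Q_D[OF assms(2), symmetric] inner_commute)

lemma lin_mv: "linear f \<Longrightarrow> linear (\<lambda>z. (M::real^'n::finite^'m::finite) *v f z)"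
  by (rule linearI) (simp_all add: linear_add linear_scale matrix_vector_right_distrib matrix_vector_mult_scaleR)

lemma norm_le_sq: "norm (z::'a::real_normed_vector) \<le> 1 + (norm z)\<^sup>2"
proof (cases "norm z \<le> 1")
  case True then show ?thesis by (smt (verit) zero_le_power2)
next
  case False
  then have "norm z * 1 \<le> norm z * norm z" by (intro mult_left_mono) auto
  then show ?thesis by (simp add: power2_eq_square)
qed

lemma A1_indef:
  fixes A1 :: "real^('n::finite+'n)^('n+'n)"
  assumes hyp: "J_hyperbolic A1" and symA: "transpose A1 = A1" and inv: "invertible A1"
  shows "\<exists>y. y \<bullet> (A1 *v y) < 0"
proof (rule ccontr)
  assume "\<not> ?thesis"
  then have psdA: "\<forall>y. 0 \<le> y \<bullet> (A1 *v y)" by (simp add: not_less)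
  obtain W where W1: "A1 ** W = mat 1" using inv invertible_right_inverse by blast
  then have W2: "W ** A1 = mat 1" using matrix_left_right_inverse by blast
  have symW: "transpose W = W"
  proof -
    have "transpose W ** A1 = mat 1"
      using arg_cong[OF W1, of transpose] by (simp add: matrix_transpose_mul symA)
    then have "transpose W = mat 1 ** W" by (metis W1 matrix_mul_assoc matrix_mul_rid)
    then show ?thesis by simp
  qed
  have AW: "A1 *v (W *v y) = y" for y using W1 by (simp add: matrix_vector_mul_assoc)
  have psd: "\<forall>y. 0 \<le> y \<bullet> (W *v y)"
  proof
    fix y
    have "y \<bullet> (W *v y) = (W *v y) \<bullet> (A1 *v (W *v y))" by (simp add: AW inner_commute)
    then show "0 \<le> y \<bullet> (W *v y)" using psdA by simp
  qed
  have comm: "(Jmat ** A1) ** W = W ** (A1 ** Jmat)"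
    by (simp add: matrix_mul_assoc[symmetric] W1) (simp add: matrix_mul_assoc W2)
  have skew: "\<forall>x. x \<bullet> ((Jmat ** A1) *v (W *v x)) = 0"
    by (simp add: matrix_vector_mul_assoc[symmetric] AW Jmat_skew)
  have "W = 0" by (rule no_psd[OF hyp symW psd comm skew])
  then have "(mat 1 :: real^('n+'n)^('n+'n)) = 0" using W1 by (simp add: vec_eq_iff matrix_matrix_mult_def)
  moreover obtain i :: "'n+'n" where True by blast
  ultimately show False by (simp add: vec_eq_iff mat_def) (metis zero_neq_one)
qed

lemma DV_QQ':
  assumes "transpose B = B" "transpose C = C" "a = Qf B y * Qf (Dm L C) y + Qf (Dm L B) y * Qf C y"
  shows "DV L (\<lambda>y. Qf B y * Qf C y) y a"
  using DV_QQ[OF assms(1,2)] assms(3) by simp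

theorem proposition1p2:
  fixes A0 :: "real^('m::finite + 'm)^('m + 'm)"
    and A1 :: "real^('k::finite + 'k)^('k + 'k)"
    and H :: "real^(('m + 'k) + ('m + 'k)) \<Rightarrow> real"
    and H0 :: "real^('m + 'm) \<Rightarrow> real"
    and Y0 :: "real^('m + 'm) \<Rightarrow> real^('m + 'm)"
  assumes A0_sym: "transpose A0 = A0"
    and A0_pd: "\<forall>x. x \<noteq> 0 \<longrightarrow> x \<bullet> (A0 *v x) > 0"
    and A1_sym: "transpose A1 = A1"
    and A1_nondeg: "invertible A1"
    and A1_hyp: "J_hyperbolic A1"
    and H_def: "H = (\<lambda>z. 1/2 * (projX z \<bullet> (A0 *v projX z)) + 1/2 * (projY z \<bullet> (A1 *v projY z)) - 1)"
    and H0_def: "H0 = (\<lambda>x. 1/2 * (x \<bullet> (A0 *v x)) - 1)"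
    and Y0_def: "Y0 = (\<lambda>x. (1/2) *\<^sub>R x)"
  shows "liouville Y0 \<and> (\<forall>x. frechet_derivative H0 (at x) (Y0 x) - H0 x > 0)
         \<and> strongly_tentacular H \<and> tentacular_hyperboloid (H -` {0})"
proof -
  define Af where "Af = blk A0 A1"
  have symAf: "transpose Af = Af" unfolding Af_def by (rule blk_sym[OF A0_sym A1_sym])
  have XAf: "\<And>z. projX (Af *v z) = A0 *v projX z" by (simp add: Af_def)
  have YAf: "\<And>z. projY (Af *v z) = A1 *v projY z" by (simp add: Af_def)
  have zAz: "\<And>z. z \<bullet> (Af *v z) = projX z \<bullet> (A0 *v projX z) + projY z \<bullet> (A1 *v projY z)"
    by (simp add: inner_XY[of _ "Af *v _"] XAf YAf)
  have Hq: "H = (\<lambda>z. 1/2 * (z \<bullet> (Af *v z)) - 1)"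
    unfolding H_def by (rule ext) (simp add: zAz algebra_simps)
  have HD: "\<And>z. (H has_derivative (\<lambda>u. u \<bullet> (Af *v z))) (at z)"
    unfolding Hq by (rule quad_deriv[OF symAf])
  have fdH: "\<And>z. frechet_derivative H (at z) = (\<lambda>u. u \<bullet> (Af *v z))"
    using frechet_derivative_at[OF HD] by metis

  have lin0: "linear Y0" unfolding Y0_def by (rule linearI) (simp_all add: scaleR_add_right)
  have fdY0: "\<And>x. frechet_derivative Y0 (at x) = Y0"
    using frechet_derivative_at linear_imp_has_derivative[OF lin0] by metis
  have liou0: "liouville Y0"
    unfolding liouville_def fdY0 using linear_smooth[OF lin0]
    by (simp add: Y0_def omega0_def matrix_vector_mult_scaleR)
  have H0D: "\<And>x. (H0 has_derivative (\<lambda>u. u \<bullet> (A0 *v x))) (at x)"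
    unfolding H0_def by (rule quad_deriv[OF A0_sym])
  have part2: "\<forall>x. frechet_derivative H0 (at x) (Y0 x) - H0 x > 0"
  proof
    fix x
    have "frechet_derivative H0 (at x) = (\<lambda>u. u \<bullet> (A0 *v x))" using frechet_derivative_at[OF H0D] by metis
    then show "frechet_derivative H0 (at x) (Y0 x) - H0 x > 0" by (simp add: Y0_def H0_def)
  qed

  obtain v0 \<mu>0 where v0: "v0 \<noteq> 0" "A0 *v v0 = \<mu>0 *\<^sub>R v0" and mu0: "\<forall>x. \<mu>0 * (x \<bullet> x) \<le> x \<bullet> (A0 *v x)"
    using min_eig[OF A0_sym] by blast
  have mu0pos: "\<mu>0 > 0"
  proof -
    have "0 < v0 \<bullet> (A0 *v v0)" using A0_pd v0(1) by blast
    also have "\<dots> = \<mu>0 * (v0 \<bullet> v0)" using v0(2) by simp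
    finally show ?thesis using inner_ge_zero[of v0] by (auto simp: zero_less_mult_iff)
  qed
  obtain v1 \<mu>1 where mu1: "\<forall>y. \<mu>1 * (y \<bullet> y) \<le> y \<bullet> (A1 *v y)"
    using min_eig[OF A1_sym] by blast
  obtain S where symS: "transpose S = S" and Spos: "\<forall>y. y \<bullet> y \<le> y \<bullet> (A1 *v (Jmat *v (S *v y)))"
    using inertia[OF A1_hyp A1_sym] by blast
  define t where "t = \<bar>\<mu>0\<bar> + \<bar>\<mu>1\<bar> + 1"
  have t0: "t \<ge> 0" unfolding t_def by simp
  define Y where "Y = (\<lambda>z::real^(('m+'k)+('m+'k)). (1/2) *\<^sub>R z + t *\<^sub>R (Jmat *v (blk 0 S *v z)))"
  have Yl: "liouville Y" "asymp_regular Y"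
    and YX: "\<And>z. projX (Y z) = (1/2) *\<^sub>R projX z"
    and YY: "\<And>z. projY (Y z) = (1/2) *\<^sub>R projY z + t *\<^sub>R (Jmat *v (S *v projY z))"
    using Y_field[OF symS, where t=t] unfolding Y_def by auto
  have dHY: "\<And>z. frechet_derivative H (at z) (Y z) =
      1/2 * (z \<bullet> (Af *v z)) + t * (projY z \<bullet> (A1 *v (Jmat *v (S *v projY z))))"
  proof -
    fix z :: "real^(('m+'k)+('m+'k))"
    let ?y = "projY z"
    have s: "(Jmat *v (S *v ?y)) \<bullet> (A1 *v ?y) = ?y \<bullet> (A1 *v (Jmat *v (S *v ?y)))"
      using sym_inner[OF A1_sym, of "Jmat *v (S *v ?y)" ?y] by (simp add: inner_commute)
    show "?thesis z"
      unfolding fdH by (simp add: inner_XY[of "Y z"] YX YY XAf YAf inner_add_left zAz s algebra_simps)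
  qed

  have h1H: "h1 H"
    unfolding h1_def
  proof (intro exI conjI allI)
    fix z :: "real^(('m+'k)+('m+'k))"
    let ?x = "projX z" and ?y = "projY z"
    have nz: "(norm z)\<^sup>2 = ?x \<bullet> ?x + ?y \<bullet> ?y" by (simp add: norm_XY power2_norm_eq_inner)
    have q: "t * (?y \<bullet> ?y) \<le> t * (?y \<bullet> (A1 *v (Jmat *v (S *v ?y))))"
      using Spos t0 by (intro mult_left_mono) auto
    have yy: "?y \<bullet> ?y \<ge> 0" by simp
    have c: "\<mu>0 / 2 * (?y \<bullet> ?y) \<le> (\<mu>1 / 2 + t) * (?y \<bullet> ?y)"
      using yy by (intro mult_right_mono) (auto simp: t_def)
    have "\<mu>0 / 2 * (norm z)\<^sup>2 - 1 \<le> \<mu>0 / 2 * (norm z)\<^sup>2" by simp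
    also have "\<dots> \<le> 1/2 * (z \<bullet> (Af *v z)) + t * (?y \<bullet> (A1 *v (Jmat *v (S *v ?y))))"
      using mu0[rule_format, of ?x] mu1[rule_format, of ?y] q c unfolding nz zAz
      by (simp add: algebra_simps)
    finally show "\<mu>0 / 2 * (norm z)\<^sup>2 - 1 \<le> frechet_derivative H (at z) (Y z)" by (simp add: dHY)
  qed (use Yl mu0pos in auto)
  have rcH: "restricted_contact H"
    unfolding restricted_contact_def
  proof (intro exI conjI allI impI)
    fix z assume "H z = 0"
    then have "z \<bullet> (Af *v z) = 2" by (simp add: Hq)
    moreover have "t * (projY z \<bullet> (A1 *v (Jmat *v (S *v projY z)))) \<ge> 0"
      using Spos t0 by (meson inner_ge_zero mult_nonneg_nonneg order_trans)
    ultimately show "frechet_derivative H (at z) (Y z) > 0" by (simp add: dHY)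
  qed (use Yl in auto)

  have h2H: "h2 H"
    unfolding h2_def
  proof (intro exI allI)
    fix x u v w :: "real^(('m+'k)+('m+'k))"
    have lg: "linear (\<lambda>z. u \<bullet> (Af *v z))"
      by (rule linearI) (simp_all add: matrix_vector_right_distrib matrix_vector_mult_scaleR inner_add_right)
    have "frechet_derivative (\<lambda>z. u \<bullet> (Af *v z)) (at y) = (\<lambda>z. u \<bullet> (Af *v z))" for y
      using frechet_derivative_at linear_imp_has_derivative[OF lg] by metis
    then have e: "(\<lambda>y. frechet_derivative (\<lambda>z. frechet_derivative H (at z) u) (at y) v) = (\<lambda>y. u \<bullet> (Af *v v))"
      by (simp add: fdH)
    have "frechet_derivative (\<lambda>y. u \<bullet> (Af *v v)) (at x) = (\<lambda>w. 0)"
      using frechet_derivative_at[OF has_derivative_const] by metis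
    then have "third_deriv H x u v w = 0" unfolding third_deriv_def e by simp
    then show "\<bar>third_deriv H x u v w\<bar> * norm x \<le> 0 * norm u * norm v * norm w" by simp
  qed

  define L1 where "L1 = Jmat ** A1"
  define I0 where "I0 = (mat 1 :: real^('k+'k)^('k+'k))"
  define S1 where "S1 = Dm L1 S"
  define S2 where "S2 = Dm L1 S1"
  define I1 where "I1 = Dm L1 I0"
  define I2 where "I2 = Dm L1 I1"
  have symI0: "transpose I0 = I0" by (simp add: I0_def)
  have symS1: "transpose S1 = S1" unfolding S1_def by (rule Dm_sym[OF symS])
  have symS2: "transpose S2 = S2" unfolding S2_def by (rule Dm_sym[OF symS1])
  have symI1: "transpose I1 = I1" unfolding I1_def by (rule Dm_sym[OF symI0])
  have symI2: "transpose I2 = I2" unfolding I2_def by (rule Dm_sym[OF symI1])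
  obtain K2 where K2: "K2 \<ge> 0" "\<forall>y. \<bar>Qf S2 y\<bar> \<le> K2 * (y \<bullet> y)" using Q_bound by blast
  obtain Kn where Kn: "Kn \<ge> 0" "\<forall>y. \<bar>Qf I1 y\<bar> \<le> Kn * (y \<bullet> y)" using Q_bound by blast
  obtain Kn2 where Kn2: "Kn2 \<ge> 0" "\<forall>y. \<bar>Qf I2 y\<bar> \<le> Kn2 * (y \<bullet> y)" using Q_bound by blast
  define d where "d = 1 / (Kn * K2 + Kn2 + 1)"
  have "Kn * K2 \<ge> 0" using K2 Kn by simp
  then have "Kn * K2 + Kn2 + 1 > 0" using Kn2 by linarith
  then have d0: "d > 0" unfolding d_def by simp
  define Phi where "Phi y = Qf S y * Qf S y + d * (Qf I0 y * Qf I0 y)" for y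
  define DPhi where "DPhi y = (Qf S y * Qf S1 y + Qf S1 y * Qf S y) + d * (Qf I0 y * Qf I1 y + Qf I1 y * Qf I0 y)" for y
  define DDPhi where "DDPhi y = ((Qf S y * Qf S2 y + Qf S1 y * Qf S1 y) + (Qf S1 y * Qf S1 y + Qf S2 y * Qf S y))
      + d * ((Qf I0 y * Qf I2 y + Qf I1 y * Qf I1 y) + (Qf I1 y * Qf I1 y + Qf I2 y * Qf I0 y))" for y
  have DV1: "DV L1 Phi y (DPhi y)" for y
    unfolding Phi_def DPhi_def S1_def I1_def
    by (intro DV_add DV_cmult DV_QQ symS symI0)
  have DV2: "DV L1 DPhi y (DDPhi y)" for y
    unfolding DPhi_def DDPhi_def
    by (intro DV_add DV_cmult DV_QQ' symS symI0 symS1 symI1) (simp_all add: S2_def I2_def S1_def I1_def)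
  define psi where "psi x = 1/2 * (x \<bullet> (A0 *v x)) - 0" for x
  define F where "F z = psi (projX z) + Phi (projY z)" for z
  have JA1: "\<And>y. - (Jmat *v (A1 *v y)) = - (L1 *v y)" by (simp add: L1_def matrix_vector_mul_assoc)
  have PF: "poisson H F z = DPhi (projY z)" for z
  proof -
    obtain D where D: "(Phi has_derivative D) (at (projY z))" "linear D" "D (- (L1 *v projY z)) = DPhi (projY z)"
      using DV1 unfolding DV_def by blast
    have psiD: "(psi has_derivative (\<lambda>u. u \<bullet> (A0 *v projX z))) (at (projX z))"
      unfolding psi_def by (rule quad_deriv[OF A0_sym])
    have linpsi: "linear (\<lambda>u. u \<bullet> (A0 *v projX z))" by (rule linearI) (simp_all add: inner_add_left)
    have "(- (Jmat *v (A0 *v projX z))) \<bullet> (A0 *v projX z) = 0"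
      using Jmat_skew[of "A0 *v projX z"] by (simp add: inner_commute)
    then show ?thesis
      unfolding F_def using poisson_XY[OF HD XAf YAf psiD linpsi D(1,2)] D(3) JA1 by simp
  qed
  have PPF: "poisson H (poisson H F) z = DDPhi (projY z)" for z
  proof -
    have e: "poisson H F = (\<lambda>z. (\<lambda>x::real^('m+'m). 0) (projX z) + DPhi (projY z))" using PF by auto
    obtain D where D: "(DPhi has_derivative D) (at (projY z))" "linear D" "D (- (L1 *v projY z)) = DDPhi (projY z)"
      using DV2 unfolding DV_def by blast
    have z0: "((\<lambda>x::real^('m+'m). 0::real) has_derivative (\<lambda>u. 0)) (at (projX z))" by simp
    have l0: "linear (\<lambda>u::real^('m+'m). 0::real)" by (rule linearI) simp_all
    show ?thesis unfolding e using poisson_XY[OF HD XAf YAf z0 l0 D(1,2)] D(3) JA1 by simp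
  qed
  have Qp: "Qf S1 y \<ge> 2 * (y \<bullet> y)" for y
  proof -
    have a: "y \<bullet> (S *v (- (L1 *v y))) = y \<bullet> (A1 *v (Jmat *v (S *v y)))"
    proof -
      have "y \<bullet> (S *v (- (L1 *v y))) = - ((S *v y) \<bullet> (Jmat *v (A1 *v y)))"
        using sym_inner[OF symS, of y] by (simp add: mvm_minus L1_def matrix_vector_mul_assoc[symmetric])
      also have "\<dots> = (Jmat *v (S *v y)) \<bullet> (A1 *v y)" by (simp add: Jmat_inner_swap)
      also have "\<dots> = y \<bullet> (A1 *v (Jmat *v (S *v y)))"
        using sym_inner[OF A1_sym, of "Jmat *v (S *v y)" y] by (simp add: inner_commute)
      finally show ?thesis .
    qed
    have b: "(- (L1 *v y)) \<bullet> (S *v y) = y \<bullet> (S *v (- (L1 *v y)))"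
      using sym_inner[OF symS, of y "- (L1 *v y)"] by (simp add: inner_commute)
    have "Qf S1 y = 2 * (y \<bullet> (A1 *v (Jmat *v (S *v y))))"
      unfolding S1_def Q_D[OF symS, symmetric] using a b by simp
    then show ?thesis using Spos by auto
  qed
  have QI0: "Qf I0 y = y \<bullet> y" for y by (simp add: Qf_def I0_def)
  have key: "DPhi y \<noteq> 0 \<or> DDPhi y > 0" if y0: "y \<noteq> 0" for y
  proof (cases "DPhi y = 0")
    case True
    have eq: "Qf S y * Qf S1 y + d * ((y \<bullet> y) * Qf I1 y) = 0"
      using True unfolding DPhi_def QI0 by (simp add: algebra_simps)
    have "Qf S1 y * Qf S1 y + Qf S y * Qf S2 y + d * (Qf I1 y * Qf I1 y + (y \<bullet> y) * Qf I2 y) > 0"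
      by (rule key_ineq[OF _ Qp K2(2)[rule_format] Kn(2)[rule_format] Kn2(2)[rule_format] Kn(1) K2(1) Kn2(1) d_def eq])
        (use y0 in simp)
    then have "DDPhi y > 0" unfolding DDPhi_def QI0 by (simp add: algebra_simps)
    then show ?thesis by simp
  qed simp
  have polyPhi: "polyf (\<lambda>z. F z)"
  proof -
    have lX: "linear (\<lambda>z::real^(('m+'k)+('m+'k)). A0 *v projX z)" by (rule lin_mv[OF linear_projX])
    have lY: "linear (\<lambda>z::real^(('m+'k)+('m+'k)). B *v projY z)" for B :: "real^('k+'k)^('k+'k)" by (rule lin_mv[OF linear_projY])
    have q: "polyf (\<lambda>z::real^(('m+'k)+('m+'k)). Qf B (projY z))" for B :: "real^('k+'k)^('k+'k)"
      unfolding Qf_def by (rule polyf_inner[OF linear_projY lY])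
    have "polyf (\<lambda>z. 1/2 * (projX z \<bullet> (A0 *v projX z)) +
       (Qf S (projY z) * Qf S (projY z) + d * (Qf I0 (projY z) * Qf I0 (projY z))))"
      by (intro polyf.padd polyf_scale polyf.pmul polyf_inner[OF linear_projX lX] q)
    then show ?thesis by (simp add: F_def psi_def Phi_def)
  qed
  have Fcont: "continuous_on UNIV F"
  proof -
    obtain F' where "\<forall>x. (F has_derivative F' x) (at x)" using polyf_deriv[OF polyPhi] by auto
    then show ?thesis by (intro has_derivative_continuous_on) auto
  qed
  have Fbound: "\<mu>0 / 2 * (projX z \<bullet> projX z) + d * ((projY z \<bullet> projY z) * (projY z \<bullet> projY z)) \<le> F z" for z
  proof -
    have "\<mu>0 / 2 * (projX z \<bullet> projX z) \<le> psi (projX z)" using mu0 by (simp add: psi_def)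
    moreover have "d * ((projY z \<bullet> projY z) * (projY z \<bullet> projY z)) \<le> Phi (projY z)"
      by (simp add: Phi_def QI0)
    ultimately show ?thesis by (simp add: F_def)
  qed
  have coerc: "coercive_on UNIV F"
    unfolding coercive_on_def
  proof
    fix c :: real
    have cl: "closed {x \<in> UNIV. F x \<le> c}" using closed_Collect_le[OF Fcont continuous_on_const] by simp
    have bd: "bounded {x \<in> UNIV. F x \<le> c}"
      unfolding bounded_iff
    proof (intro exI ballI)
      fix z assume "z \<in> {x \<in> UNIV. F x \<le> c}"
      then have Fz: "F z \<le> c" by simp
      let ?a = "projX z \<bullet> projX z" and ?b = "projY z \<bullet> projY z"
      have a0: "?a \<ge> 0" and b0: "?b \<ge> 0" by simp_all
      have bb: "d * (?b * ?b) \<ge> 0" using d0 by simp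
      have "\<mu>0 / 2 * ?a \<le> c" using Fbound[of z] Fz bb by linarith
      then have a1: "?a \<le> 2 * \<bar>c\<bar> / \<mu>0" using mu0pos by (simp add: field_simps)
      have b1: "?b \<le> 1 + \<bar>c\<bar> / d"
      proof (cases "?b \<le> 1")
        case True then show ?thesis using d0 by (simp add: add_increasing2)
      next
        case False
        then have "?b * 1 \<le> ?b * ?b" by (intro mult_left_mono) auto
        moreover have "d * (?b * ?b) \<le> c"
        proof -
          have "\<mu>0 / 2 * ?a \<ge> 0" using mu0pos a0 by simp
          then show ?thesis using Fbound[of z] Fz by linarith
        qed
        ultimately have "d * ?b \<le> \<bar>c\<bar>" using d0 by (smt (verit) mult_left_mono)
        then show ?thesis using d0 by (simp add: field_simps)
      qed
      have "norm z \<le> 1 + (norm z)\<^sup>2" by (rule norm_le_sq)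
      also have "(norm z)\<^sup>2 = ?a + ?b" by (simp add: norm_XY power2_norm_eq_inner)
      finally show "norm z \<le> 2 + 2 * \<bar>c\<bar> / \<mu>0 + \<bar>c\<bar> / d" using a1 b1 by linarith
    qed
    show "compact {x \<in> UNIV. F x \<le> c}" using cl bd by (simp add: compact_eq_bounded_closed)
  qed
  have h3H: "h3 H"
    unfolding h3_def
  proof (intro exI conjI)
    show "open (UNIV :: (real^(('m+'k)+('m+'k))) set)" by simp
    show "H -` {0} \<subseteq> UNIV" by simp
    show "smooth_on UNIV F" using polyf_smooth[OF polyPhi] by simp
    show "coercive_on UNIV F" by (rule coerc)
    show "compact (cball (0::real^(('m+'k)+('m+'k))) (1 + 2 / \<mu>0))" by simp
    show "\<forall>x\<in>H -` {0} - cball 0 (1 + 2 / \<mu>0). poisson H F x \<noteq> 0 \<or> poisson H (poisson H F) x > 0"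
    proof
      fix z assume z: "z \<in> H -` {0} - cball 0 (1 + 2 / \<mu>0)"
      have y0: "projY z \<noteq> 0"
      proof
        assume yz: "projY z = 0"
        have "z \<bullet> (Af *v z) = 2" using z by (simp add: Hq)
        then have "projX z \<bullet> (A0 *v projX z) = 2" using yz by (simp add: zAz)
        then have "\<mu>0 * (projX z \<bullet> projX z) \<le> 2" using mu0 by metis
        then have "projX z \<bullet> projX z \<le> 2 / \<mu>0" using mu0pos by (simp add: field_simps)
        moreover have "(norm z)\<^sup>2 = projX z \<bullet> projX z" using yz by (simp add: norm_XY power2_norm_eq_inner)
        ultimately have "norm z \<le> 1 + 2 / \<mu>0" using norm_le_sq[of z] by linarith
        then show False using z by (simp add: dist_norm)
      qed
      show "poisson H F z \<noteq> 0 \<or> poisson H (poisson H F) z > 0"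
        using key[OF y0] by (simp add: PF PPF)
    qed
  qed

  have smH: "smooth_on UNIV H"
  proof -
    have "polyf (\<lambda>z::real^(('m+'k)+('m+'k)). 1/2 * (z \<bullet> (Af *v z)) + (-1))"
      by (intro polyf.padd polyf_scale polyf.pconst polyf_inner) (simp_all add: linear_iff matrix_vector_right_distrib matrix_vector_mult_scaleR)
    then show ?thesis using polyf_smooth unfolding Hq by simp
  qed
  have stH: "strongly_tentacular H"
    unfolding strongly_tentacular_def classH_def using smH h1H h2H h3H rcH by blast

  have invAf: "invertible Af"
  proof -
    obtain W where W1: "A1 ** W = mat 1" using A1_nondeg invertible_right_inverse by blast
    then have W2: "W ** A1 = mat 1" using matrix_left_right_inverse by blast
    have "z = 0" if "Af *v z = 0" for z
    proof -
      have x: "A0 *v projX z = 0" using arg_cong[OF that, of projX] by (simp add: XAf)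
      have y: "A1 *v projY z = 0" using arg_cong[OF that, of projY] by (simp add: YAf)
      have "projX z = 0" using A0_pd x by force
      moreover have "projY z = 0"
      proof -
        have "projY z = (W ** A1) *v projY z" by (simp add: W2)
        also have "\<dots> = 0" by (simp add: matrix_vector_mul_assoc[symmetric] y)
        finally show ?thesis .
      qed
      ultimately show ?thesis by (metis XY_eqI projX_0 projY_0)
    qed
    then show ?thesis using invertible_left_inverse matrix_left_invertible_ker by blast
  qed
  have posev: "\<exists>c>0. \<exists>v. v \<noteq> 0 \<and> Af *v v = c *s v"
  proof -
    have symN: "transpose (- Af) = - Af" by (simp add: transpose_neg symAf)
    obtain v \<mu> where v: "v \<noteq> 0" "(- Af) *v v = \<mu> *\<^sub>R v" and b: "\<forall>y. \<mu> * (y \<bullet> y) \<le> y \<bullet> ((- Af) *v y)"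
      using min_eig[OF symN] by blast
    obtain i :: "'m+'m" where True by blast
    define y where "y = embXY (axis i (1::real)) (0::real^('k+'k))"
    have "y \<bullet> (Af *v y) = axis i 1 \<bullet> (A0 *v axis i 1)" by (simp add: zAz y_def)
    also have "\<dots> > 0" using A0_pd by (simp add: axis_eq_0_iff)
    finally have pos: "y \<bullet> (Af *v y) > 0" .
    have yy: "y \<bullet> y = 1"
    proof -
      have "y \<bullet> y = projX y \<bullet> projX y + projY y \<bullet> projY y" by (rule inner_XY)
      then show ?thesis by (simp add: y_def inner_axis_axis)
    qed
    have "\<mu> < 0" using b[rule_format, of y] pos yy by (simp add: neg_mvm)
    moreover have "Af *v v = (- \<mu>) *s v"
    proof -
      have "- (Af *v v) = \<mu> *\<^sub>R v" using v(2) by (simp add: neg_mvm)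
      then have "Af *v v = (- \<mu>) *\<^sub>R v" by (metis minus_minus scaleR_minus_left)
      then show ?thesis by (simp add: scalar_mult_eq_scaleR)
    qed
    ultimately show ?thesis using v(1) by (intro exI[of _ "- \<mu>"]) auto
  qed
  have negev: "\<exists>c<0. \<exists>v. v \<noteq> 0 \<and> Af *v v = c *s v"
  proof -
    obtain y1 where y1: "y1 \<bullet> (A1 *v y1) < 0" using A1_indef[OF A1_hyp A1_sym A1_nondeg] by blast
    have y10: "y1 \<noteq> 0" using y1 by auto
    obtain v \<mu> where v: "v \<noteq> 0" "Af *v v = \<mu> *\<^sub>R v" and b: "\<forall>y. \<mu> * (y \<bullet> y) \<le> y \<bullet> (Af *v y)"
      using min_eig[OF symAf] by blast
    define y where "y = embXY (0::real^('m+'m)) y1"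
    have "y \<bullet> (Af *v y) = y1 \<bullet> (A1 *v y1)" by (simp add: zAz y_def)
    moreover have "y \<bullet> y = y1 \<bullet> y1"
    proof -
      have "y \<bullet> y = projX y \<bullet> projX y + projY y \<bullet> projY y" by (rule inner_XY)
      then show ?thesis by (simp add: y_def)
    qed
    moreover have "y1 \<bullet> y1 > 0" using y10 by simp
    ultimately have "\<mu> < 0" using b[rule_format, of y] y1 by (smt (verit) mult_nonneg_nonneg)
    moreover have "Af *v v = \<mu> *s v" using v(2) by (simp add: scalar_mult_eq_scaleR)
    ultimately show ?thesis using v(1) by blast
  qed
  have quadEq: "quadH Af = H" by (simp add: Hq quadH_def fun_eq_iff)
  have sympl: "symplectic_matrix (mat 1 :: real^(('m+'k)+('m+'k))^(('m+'k)+('m+'k)))"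
    unfolding symplectic_matrix_def invertible_def by auto
  have th: "tentacular_hyperboloid (H -` {0})"
    unfolding tentacular_hyperboloid_def
    apply (rule exI[of _ "mat 1"], rule exI[of _ Af])
    using sympl symAf invAf posev negev stH quadEq
    by (simp add: hyperboloid_matrix_def)
  show ?thesis using liou0 part2 stH th by blast
qed

end
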